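(* Let $(\Omega,\mathcal F)$ be a measurable space and let $\succeq$ be a preference order on $\mathcal L^\infty(\Omega,\mathcal F)$ satisfying (SM) and (PC). Then the following are equivalent: (i) $\succeq$ satisfies (ST); (ii) every representing functional $T$ for $\succeq$ is conditionable, i.e. conditionable on every sub-$\sigma$-algebra $\mathcal G\subseteq\mathcal F$; (iii) every representing functional $T$ for $\succeq$ is conditionable on $\sigma(A)=\{\varnothing,\Omega,A,A^c\}$ for every $A\in\mathcal F$.
   Context: $\mathcal L^\infty(\Omega,\mathcal F)$ is the set of bounded $\mathcal F$-measurable functions $\Omega\to\mathbb R$ (bounded everywhere); constants $x\in\mathbb R$ are identified with constant functions. A preference order $\succeq$ is a complete and transitive binary relation on it; $f\succ g$ means $f\succeq g$ and not $g\succeq f$; $f\sim g$ means $f\succeq g$ and $g\succeq f$. The null events are $\mathcal N_\succeq=\{A\in\mathcal F: f1_A+g1_{A^c}\sim g\ \forall f,g\}$; an event is non-null if it is not in $\mathcal N_\succeq$. (SM): for every non-null $A\in\mathcal F$, every $f$ and constants $x>y$: $x1_A+f1_{A^c}\succ y1_A+f1_{A^c}$. (ST): for all $f,g,h$ and $A\in\mathcal F$, if $f1_A+h1_{A^c}\succeq g1_A+h1_{A^c}$ then $f1_A+\tilde h1_{A^c}\succeq g1_A+\tilde h1_{A^c}$ for every $\tilde h$. (PC): for every uniformly bounded sequence $(f_n)$ with $f_n(\omega)\to f(\omega)$ for all $\omega$, and every $g$ with $g\succ f$ (resp. $f\succ g$), there is $N$ with $g\succ f_n$ (resp. $f_n\succ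 g$) for all $n>N$. A functional $T:\mathcal L^\infty(\Omega,\mathcal F)\to\mathbb R$ represents $\succeq$ if $T(f)\ge T(g)\iff f\succeq g$. $T$ is conditionable on a sub-$\sigma$-algebra $\mathcal G$ if for every $f\in\mathcal L^\infty(\Omega,\mathcal F)$ there exists $g\in\mathcal L^\infty(\Omega,\mathcal G)$ with $T(f1_A)=T(g1_A)$ for all $A\in\mathcal G$. *)

theory Defs
  imports "HOL-Analysis.Analysis"
begin

text \<open>The sample space Omega is the universe of the type 'a; F is a sigma-algebra on it.\<close>

definition Fmeasurable :: "'a set set \<Rightarrow> ('a \<Rightarrow> real) \<Rightarrow> bool" where
  "Fmeasurable F f \<longleftrightarrow> (\<forall>B \<in> sets borel. f -` B \<in> F)"

definition Linf :: "'a set set \<Rightarrow> ('a \<Rightarrow> real) set" where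
  "Linf F = {f. Fmeasurable F f \<and> (\<exists>C. \<forall>\<omega>. \<bar>f \<omega>\<bar> \<le> C)}"

definition const_fun :: "real \<Rightarrow> 'a \<Rightarrow> real" where
  "const_fun x = (\<lambda>_. x)"

definition paste :: "'a set \<Rightarrow> ('a \<Rightarrow> real) \<Rightarrow> ('a \<Rightarrow> real) \<Rightarrow> 'a \<Rightarrow> real" where
  "paste A f g = (\<lambda>\<omega>. if \<omega> \<in> A then f \<omega> else g \<omega>)"

definition preference_order :: "'a set set \<Rightarrow> (('a \<Rightarrow> real) \<Rightarrow> ('a \<Rightarrow> real) \<Rightarrow> bool) \<Rightarrow> bool" where
  "preference_order F R \<longleftrightarrow>
     (\<forall>f \<in> Linf F. \<forall>g \<in> Linf F. R f g \<or> R g f) \<and>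
     (\<forall>f \<in> Linf F. \<forall>g \<in> Linf F. \<forall>h \<in> Linf F. R f g \<longrightarrow> R g h \<longrightarrow> R f h)"

definition strict_pref where "strict_pref R f g \<longleftrightarrow> R f g \<and> \<not> R g f"
definition indiff where "indiff R f g \<longleftrightarrow> R f g \<and> R g f"

definition null_events :: "'a set set \<Rightarrow> (('a \<Rightarrow> real) \<Rightarrow> ('a \<Rightarrow> real) \<Rightarrow> bool) \<Rightarrow> 'a set set" where
  "null_events F R = {A \<in> F. \<forall>f \<in> Linf F. \<forall>g \<in> Linf F. indiff R (paste A f g) g}"

definition SM :: "'a set set \<Rightarrow> (('a \<Rightarrow> real) \<Rightarrow> ('a \<Rightarrow> real) \<Rightarrow> bool) \<Rightarrow> bool" where
  "SM F R \<longleftrightarrow> (\<forall>A \<in> F. A \<notin> null_events F R \<longrightarrow>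
     (\<forall>f \<in> Linf F. \<forall>x y::real. x > y \<longrightarrow>
        strict_pref R (paste A (const_fun x) f) (paste A (const_fun y) f)))"

definition ST :: "'a set set \<Rightarrow> (('a \<Rightarrow> real) \<Rightarrow> ('a \<Rightarrow> real) \<Rightarrow> bool) \<Rightarrow> bool" where
  "ST F R \<longleftrightarrow> (\<forall>f \<in> Linf F. \<forall>g \<in> Linf F. \<forall>h \<in> Linf F. \<forall>A \<in> F.
     R (paste A f h) (paste A g h) \<longrightarrow>
     (\<forall>h' \<in> Linf F. R (paste A f h') (paste A g h')))"

definition PC :: "'a set set \<Rightarrow> (('a \<Rightarrow> real) \<Rightarrow> ('a \<Rightarrow> real) \<Rightarrow> bool) \<Rightarrow> bool" where
  "PC F R \<longleftrightarrow> (\<forall>fs :: nat \<Rightarrow> 'a \<Rightarrow> real. \<forall>f \<in> Linf F.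
     (\<forall>n. fs n \<in> Linf F) \<longrightarrow> (\<exists>C. \<forall>n \<omega>. \<bar>fs n \<omega>\<bar> \<le> C) \<longrightarrow>
     (\<forall>\<omega>. (\<lambda>n. fs n \<omega>) \<longlonglongrightarrow> f \<omega>) \<longrightarrow>
     (\<forall>g \<in> Linf F.
        (strict_pref R g f \<longrightarrow> (\<exists>N. \<forall>n > N. strict_pref R g (fs n))) \<and>
        (strict_pref R f g \<longrightarrow> (\<exists>N. \<forall>n > N. strict_pref R (fs n) g))))"

definition represents :: "'a set set \<Rightarrow> (('a \<Rightarrow> real) \<Rightarrow> real) \<Rightarrow> (('a \<Rightarrow> real) \<Rightarrow> ('a \<Rightarrow> real) \<Rightarrow> bool) \<Rightarrow> bool" where
  "represents F T R \<longleftrightarrow> (\<forall>f \<in> Linf F. \<forall>g \<in> Linf F. T f \<ge> T g \<longleftrightarrow> R f g)"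

definition conditionable_on :: "'a set set \<Rightarrow> (('a \<Rightarrow> real) \<Rightarrow> real) \<Rightarrow> 'a set set \<Rightarrow> bool" where
  "conditionable_on F T G \<longleftrightarrow> (\<forall>f \<in> Linf F. \<exists>g \<in> Linf G.
     \<forall>A \<in> G. T (paste A f (const_fun 0)) = T (paste A g (const_fun 0)))"

definition sub_sigma :: "'a set set \<Rightarrow> 'a set set \<Rightarrow> bool" where
  "sub_sigma G F \<longleftrightarrow> sigma_algebra UNIV G \<and> G \<subseteq> F"

definition sigma_of_set :: "'a set \<Rightarrow> 'a set set" where
  "sigma_of_set A = {{}, UNIV, A, - A}"

end

theory Submission imports Defs begin

lemma Fmeas_iff:
  assumes "sigma_algebra (UNIV::'a set) F"
  shows "Fmeasurable F f \<longleftrightarrow> f \<in> borel_measurable (sigma (UNIV::'a set) F)"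
proof -
  interpret sigma_algebra "UNIV::'a set" F by fact
  show ?thesis
    by (simp add: Fmeasurable_def measurable_def space_measure_of_conv)
qed

lemma Linf_iff:
  assumes "sigma_algebra (UNIV::'a set) F"
  shows "f \<in> Linf F \<longleftrightarrow> f \<in> borel_measurable (sigma (UNIV::'a set) F) \<and> (\<exists>C. \<forall>\<omega>. \<bar>f \<omega>\<bar> \<le> C)"
  using Fmeas_iff[OF assms] by (simp add: Linf_def)

locale pref =
  fixes F :: "'a set set" and R :: "('a \<Rightarrow> real) \<Rightarrow> ('a \<Rightarrow> real) \<Rightarrow> bool"
  assumes sa: "sigma_algebra (UNIV :: 'a set) F"
    and po: "preference_order F R"
    and sm: "SM F R"
    and pc: "PC F R"
begin

abbreviation "M \<equiv> sigma (UNIV::'a set) F"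

lemma sets_M[simp]: "sets M = F"
  using sigma_algebra.sets_measure_of_eq[OF sa] by simp
lemma space_M[simp]: "space M = UNIV"
  by (simp add: space_measure_of_conv)

lemma inF_measurable: "A \<in> F \<Longrightarrow> A \<in> sets M" by simp

lemma const_Linf[simp]: "const_fun x \<in> Linf F"
  unfolding Linf_iff[OF sa] const_fun_def by auto

lemma paste_Linf[simp]:
  assumes "A \<in> F" "f \<in> Linf F" "g \<in> Linf F"
  shows "paste A f g \<in> Linf F"
proof -
  from assms obtain C1 C2 where c: "\<forall>\<omega>. \<bar>f \<omega>\<bar> \<le> C1" "\<forall>\<omega>. \<bar>g \<omega>\<bar> \<le> C2"
    and m: "f \<in> borel_measurable M" "g \<in> borel_measurable M" by (auto simp: Linf_iff[OF sa])
  have "paste A f g \<in> borel_measurable M"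
    unfolding paste_def by (rule measurable_If_set) (use m assms in auto)
  moreover have "\<forall>\<omega>. \<bar>paste A f g \<omega>\<bar> \<le> max C1 C2"
  proof
    fix \<omega> show "\<bar>paste A f g \<omega>\<bar> \<le> max C1 C2"
      using c[rule_format, of \<omega>] by (simp add: paste_def le_max_iff_disj)
  qed
  ultimately show ?thesis by (auto simp: Linf_iff[OF sa])
qed

lemma total: "f \<in> Linf F \<Longrightarrow> g \<in> Linf F \<Longrightarrow> R f g \<or> R g f"
  using po unfolding preference_order_def by blast
lemma refl: "f \<in> Linf F \<Longrightarrow> R f f"
  using total by blast
lemma trans: "R f g \<Longrightarrow> R g h \<Longrightarrow> f \<in> Linf F \<Longrightarrow> g \<in> Linf F \<Longrightarrow> h \<in> Linf F \<Longrightarrow> R f h"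
  using po unfolding preference_order_def by blast

end

sublocale pref \<subseteq> S: sigma_algebra "UNIV::'a set" F by (rule sa)

context pref begin
lemma UNIV_F[simp]: "UNIV \<in> F" using S.top by simp
lemma compl_F[simp]: "A \<in> F \<Longrightarrow> - A \<in> F" using S.compl_sets[of A] by (simp add: Compl_eq_Diff_UNIV)

lemma Int_F[simp]: "A \<in> F \<Longrightarrow> B \<in> F \<Longrightarrow> A \<inter> B \<in> F" using S.Int by simp
lemma Un_F[simp]: "A \<in> F \<Longrightarrow> B \<in> F \<Longrightarrow> A \<union> B \<in> F" using S.Un by simp
lemma Diff_F[simp]: "A \<in> F \<Longrightarrow> B \<in> F \<Longrightarrow> A - B \<in> F" using S.Diff by simp

lemma Linf_meas: "f \<in> Linf F \<Longrightarrow> f \<in> borel_measurable M"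
  by (simp add: Linf_iff[OF sa])
lemma Linf_bnd: "f \<in> Linf F \<Longrightarrow> \<exists>C. \<forall>\<omega>. \<bar>f \<omega>\<bar> \<le> C"
  by (simp add: Linf_def)
lemma Linf_vimage: "f \<in> Linf F \<Longrightarrow> B \<in> sets borel \<Longrightarrow> f -` B \<in> F"
  by (simp add: Linf_def Fmeasurable_def)
lemma Linf_I: "f \<in> borel_measurable M \<Longrightarrow> \<forall>\<omega>. \<bar>f \<omega>\<bar> \<le> C \<Longrightarrow> f \<in> Linf F"
  by (auto simp: Linf_iff[OF sa])

lemma pc_lower:
  assumes "\<And>n. fs n \<in> Linf F" "\<And>n \<omega>. \<bar>fs n \<omega>\<bar> \<le> C" "\<And>\<omega>. (\<lambda>n. fs n \<omega>) \<longlonglongrightarrow> f \<omega>"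
    "f \<in> Linf F" "g \<in> Linf F" "strict_pref R g f"
  shows "\<exists>N. \<forall>n>N. strict_pref R g (fs n)"
proof -
  have "\<exists>C. \<forall>n \<omega>. \<bar>fs n \<omega>\<bar> \<le> C" using assms(2) by blast
  then show ?thesis using pc assms(1,3,4,5,6) unfolding PC_def by blast
qed

lemma pc_upper:
  assumes "\<And>n. fs n \<in> Linf F" "\<And>n \<omega>. \<bar>fs n \<omega>\<bar> \<le> C" "\<And>\<omega>. (\<lambda>n. fs n \<omega>) \<longlonglongrightarrow> f \<omega>"
    "f \<in> Linf F" "g \<in> Linf F" "strict_pref R f g"
  shows "\<exists>N. \<forall>n>N. strict_pref R (fs n) g"
proof -
  have "\<exists>C. \<forall>n \<omega>. \<bar>fs n \<omega>\<bar> \<le> C" using assms(2) by blast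
  then show ?thesis using pc assms(1,3,4,5,6) unfolding PC_def by blast
qed

definition "nullE = null_events F R"

lemma null_iff: "A \<in> nullE \<longleftrightarrow> A \<in> F \<and> (\<forall>f \<in> Linf F. \<forall>g \<in> Linf F. R (paste A f g) g \<and> R g (paste A f g))"
  unfolding nullE_def null_events_def indiff_def by blast

lemma sm_strict:
  assumes "A \<in> F" "A \<notin> nullE" "f \<in> Linf F" "x > y"
  shows "strict_pref R (paste A (const_fun x) f) (paste A (const_fun y) f)"
  using sm assms unfolding SM_def nullE_def by blast

lemma total_strict: "f \<in> Linf F \<Longrightarrow> g \<in> Linf F \<Longrightarrow> \<not> R f g \<Longrightarrow> strict_pref R g f"
  using total unfolding strict_pref_def by blast

lemma paste_UNIV[simp]: "paste UNIV f g = f" by (simp add: paste_def)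
lemma paste_empty[simp]: "paste {} f g = g" by (simp add: paste_def)
lemma paste_same[simp]: "paste A f f = f" by (simp add: paste_def)

lemma empty_null: "{} \<in> nullE"
  unfolding null_iff by (auto intro: refl)

lemma step_mono:
  assumes "A \<in> F" "x \<ge> y" "k \<in> Linf F"
  shows "R (paste A (const_fun x) k) (paste A (const_fun y) k)"
proof (cases "A \<in> nullE")
  case True
  then have "R (paste A (const_fun x) k) k" "R k (paste A (const_fun y) k)"
    using assms unfolding null_iff by auto
  then show ?thesis using trans assms by (meson const_Linf paste_Linf)
next
  case False
  show ?thesis
  proof (cases "x = y")
    case True then show ?thesis using refl assms by simp
  next
    case False
    with assms have "x > y" by simp
    then show ?thesis using sm_strict[OF assms(1) \<open>A \<notin> nullE\<close> assms(3)] unfolding strict_pref_def by blast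
  qed
qed

lemma mono_finite:
  assumes f: "f \<in> Linf F" and g: "g \<in> Linf F" and ff: "finite (range f)" and fg: "finite (range g)"
    and le: "\<And>\<omega>. f \<omega> \<le> g \<omega>"
  shows "R g f"
proof -
  define E where "E p = {\<omega>. g \<omega> = fst p \<and> f \<omega> = snd p}" for p
  have EF: "E p \<in> F" for p
  proof -
    have "E p = g -` {fst p} \<inter> f -` {snd p}" by (auto simp: E_def)
    then show ?thesis using Linf_vimage[OF g, of "{fst p}"] Linf_vimage[OF f, of "{snd p}"] by simp
  qed
  define P where "P = range g \<times> range f"
  have fP: "finite P" using ff fg by (simp add: P_def)
  have main: "finite S \<Longrightarrow> R (paste (\<Union>p\<in>S. E p) g f) f \<and> (\<Union>p\<in>S. E p) \<in> F" for S
  proof (induction S rule: finite_induct)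
    case empty then show ?case using refl f by simp
  next
    case (insert p S)
    let ?U = "\<Union>p\<in>S. E p"
    from insert have IH: "R (paste ?U g f) f" "?U \<in> F" by auto
    have UF: "(\<Union>p\<in>insert p S. E p) \<in> F" using IH(2) EF by simp
    have pl: "paste ?U g f \<in> Linf F" using IH f g by simp
    have disj: "E p \<inter> ?U = {}"
    proof -
      have "E p \<inter> E q = {}" if "q \<in> S" for q
        using that insert(2) by (auto simp: E_def) (metis prod.collapse)
      then show ?thesis by blast
    qed
    have eq1: "paste (\<Union>p\<in>insert p S. E p) g f = paste (E p) (const_fun (fst p)) (paste ?U g f)"
      by (auto simp: paste_def const_fun_def E_def fun_eq_iff)
    have eq2: "paste ?U g f = paste (E p) (const_fun (snd p)) (paste ?U g f)"
      using disj insert(2) by (auto simp: paste_def const_fun_def E_def fun_eq_iff)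
    have st: "R (paste (\<Union>p\<in>insert p S. E p) g f) (paste ?U g f)"
    proof (cases "E p = {}")
      case True then show ?thesis using eq1 eq2 refl pl by simp
    next
      case False
      then obtain \<omega> where "\<omega> \<in> E p" by blast
      then have ge: "fst p \<ge> snd p" using le[of \<omega>] by (simp add: E_def)
      have "R (paste (E p) (const_fun (fst p)) (paste ?U g f)) (paste (E p) (const_fun (snd p)) (paste ?U g f))"
        by (rule step_mono[OF EF ge pl])
      then show ?thesis unfolding eq1 by (metis eq2)
    qed
    have "R (paste (\<Union>p\<in>insert p S. E p) g f) f"
      using trans[OF st IH(1)] UF pl f g by simp
    then show ?case using UF by simp
  qed
  have "(\<Union>p\<in>P. E p) = UNIV" by (auto simp: P_def E_def)
  then show ?thesis using main[OF fP] by simp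
qed

definition fl :: "nat \<Rightarrow> ('a \<Rightarrow> real) \<Rightarrow> 'a \<Rightarrow> real" where
  "fl n f = (\<lambda>\<omega>. real_of_int \<lfloor>f \<omega> * real (Suc n)\<rfloor> / real (Suc n))"

lemma fl_le: "fl n f \<omega> \<le> f \<omega>"
proof -
  have "real_of_int \<lfloor>f \<omega> * real (Suc n)\<rfloor> \<le> f \<omega> * real (Suc n)" by simp
  then show ?thesis by (simp add: fl_def divide_le_eq)
qed

lemma fl_ge: "fl n f \<omega> \<ge> f \<omega> - 1 / real (Suc n)"
proof -
  have "real_of_int \<lfloor>f \<omega> * real (Suc n)\<rfloor> \<ge> f \<omega> * real (Suc n) - 1" by linarith
  then have "real_of_int \<lfloor>f \<omega> * real (Suc n)\<rfloor> / real (Suc n) \<ge> (f \<omega> * real (Suc n) - 1) / real (Suc n)"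
    by (simp add: divide_right_mono)
  also have "(f \<omega> * real (Suc n) - 1) / real (Suc n) = f \<omega> - 1 / real (Suc n)"
    by (simp add: field_simps)
  finally show ?thesis by (simp add: fl_def)
qed

lemma fl_lim: "(\<lambda>n. fl n f \<omega>) \<longlonglongrightarrow> f \<omega>"
proof (rule real_tendsto_sandwich[OF _ _ _ tendsto_const])
  show "\<forall>\<^sub>F n in sequentially. f \<omega> + - inverse (real (Suc n)) \<le> fl n f \<omega>"
    using fl_ge by (simp add: inverse_eq_divide)
  show "\<forall>\<^sub>F n in sequentially. fl n f \<omega> \<le> f \<omega>" using fl_le by simp
  show "(\<lambda>n. f \<omega> + - inverse (real (Suc n))) \<longlonglongrightarrow> f \<omega>"
    by (rule LIMSEQ_inverse_real_of_nat_add_minus)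
qed

lemma fl_Linf:
  assumes f: "f \<in> Linf F" and C: "\<And>\<omega>. \<bar>f \<omega>\<bar> \<le> C"
  shows "fl n f \<in> Linf F" "\<And>\<omega>. \<bar>fl n f \<omega>\<bar> \<le> C + 1" "finite (range (fl n f))"
proof -
  have m[measurable]: "f \<in> borel_measurable M" using Linf_meas[OF f] .
  have "fl n f \<in> borel_measurable M" unfolding fl_def by measurable
  show b: "\<bar>fl n f \<omega>\<bar> \<le> C + 1" for \<omega>
  proof -
    have "1 / real (Suc n) \<le> 1" by simp
    then show ?thesis using fl_le[of n f \<omega>] fl_ge[of f \<omega> n] C[of \<omega>] by linarith
  qed
  then show "fl n f \<in> Linf F" using Linf_I[OF \<open>fl n f \<in> borel_measurable M\<close>] by blast
  define K where "K = \<lceil>(C + 2) * real (Suc n)\<rceil>"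
  have "range (fl n f) \<subseteq> (\<lambda>k. real_of_int k / real (Suc n)) ` {-K..K}"
  proof
    fix y assume "y \<in> range (fl n f)"
    then obtain \<omega> where y: "y = fl n f \<omega>" by blast
    let ?k = "\<lfloor>f \<omega> * real (Suc n)\<rfloor>"
    have "\<bar>f \<omega> * real (Suc n)\<bar> \<le> C * real (Suc n)"
      using C[of \<omega>] by (simp add: abs_mult mult_right_mono)
    moreover have "C \<ge> 0" using C[of \<omega>] by linarith
    moreover have k1: "real_of_int ?k \<le> f \<omega> * real (Suc n)" by simp
    moreover have k2: "real_of_int ?k > f \<omega> * real (Suc n) - 1" by (rule real_of_int_floor_gt_diff_one)
    moreover have "C * real (Suc n) + 1 \<le> (C + 2) * real (Suc n)"
    proof -
      have "real (Suc n) \<ge> 1" by simp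
      then show ?thesis by (simp add: distrib_right)
    qed
    ultimately have "\<bar>real_of_int ?k\<bar> \<le> (C + 2) * real (Suc n)"
    proof -
      assume A: "\<bar>f \<omega> * real (Suc n)\<bar> \<le> C * real (Suc n)" "C \<ge> 0"
        "real_of_int ?k \<le> f \<omega> * real (Suc n)" "real_of_int ?k > f \<omega> * real (Suc n) - 1"
        "C * real (Suc n) + 1 \<le> (C + 2) * real (Suc n)"
      have a1: "f \<omega> * real (Suc n) \<le> C * real (Suc n)" using abs_le_D1[OF A(1)] .
      have a2: "- (f \<omega> * real (Suc n)) \<le> C * real (Suc n)" using abs_le_D2[OF A(1)] .
      have "real_of_int ?k \<le> (C + 2) * real (Suc n)" using a1 A by linarith
      moreover have "- real_of_int ?k \<le> (C + 2) * real (Suc n)" using a2 A by linarith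
      ultimately show ?thesis by (simp only: abs_le_iff)
    qed
    then have "?k \<in> {-K..K}" unfolding K_def by (simp add: abs_le_iff; linarith)
    then show "y \<in> (\<lambda>k. real_of_int k / real (Suc n)) ` {-K..K}" using y by (auto simp: fl_def)
  qed
  then show "finite (range (fl n f))" by (rule finite_subset) simp
qed

lemma mono:
  assumes f: "f \<in> Linf F" and g: "g \<in> Linf F" and le: "\<And>\<omega>. f \<omega> \<le> g \<omega>"
  shows "R g f"
proof (rule ccontr)
  assume "\<not> R g f"
  then have s: "strict_pref R f g" using total_strict f g by blast
  obtain C where C: "\<And>\<omega>. \<bar>f \<omega>\<bar> \<le> C" "\<And>\<omega>. \<bar>g \<omega>\<bar> \<le> C"
  proof -
    obtain C1 C2 where "\<forall>\<omega>. \<bar>f \<omega>\<bar> \<le> C1" "\<forall>\<omega>. \<bar>g \<omega>\<bar> \<le> C2" using Linf_bnd[OF f] Linf_bnd[OF g] by blast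
    then have "\<bar>f \<omega>\<bar> \<le> max C1 C2" "\<bar>g \<omega>\<bar> \<le> max C1 C2" for \<omega>
      by (simp_all add: le_max_iff_disj)
    then show ?thesis using that by blast
  qed
  define mg where "mg = (\<lambda>\<omega>. - g \<omega>)"
  have mgL: "mg \<in> Linf F" "\<And>\<omega>. \<bar>mg \<omega>\<bar> \<le> C"
  proof -
    have [measurable]: "g \<in> borel_measurable M" using Linf_meas[OF g] .
    have "mg \<in> borel_measurable M" unfolding mg_def by measurable
    then show "mg \<in> Linf F" using Linf_I[of mg C] C(2) by (simp add: mg_def)
    show "\<bar>mg \<omega>\<bar> \<le> C" for \<omega> using C(2) by (simp add: mg_def)
  qed
  define gs where "gs n = (\<lambda>\<omega>. - fl n mg \<omega>)" for n
  have gsL: "gs n \<in> Linf F" "\<bar>gs n \<omega>\<bar> \<le> C + 1" "finite (range (gs n))" for n \<omega>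
  proof -
    have [measurable]: "fl n mg \<in> borel_measurable M" using Linf_meas fl_Linf(1)[OF mgL] by blast
    have "gs n \<in> borel_measurable M" unfolding gs_def by measurable
    then show "gs n \<in> Linf F" using Linf_I[of "gs n" "C+1"] fl_Linf(2)[OF mgL] by (simp add: gs_def)
    show "\<bar>gs n \<omega>\<bar> \<le> C + 1" using fl_Linf(2)[OF mgL] by (simp add: gs_def)
    have "range (gs n) = uminus ` range (fl n mg)" by (auto simp: gs_def)
    then show "finite (range (gs n))" using fl_Linf(3)[OF mgL] by simp
  qed
  have gslim: "(\<lambda>n. gs n \<omega>) \<longlonglongrightarrow> g \<omega>" for \<omega>
    using tendsto_minus[OF fl_lim[of mg \<omega>]] by (simp add: gs_def mg_def)
  have gsge: "g \<omega> \<le> gs n \<omega>" for n \<omega> using fl_le[of n mg \<omega>] by (simp add: gs_def mg_def)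
  obtain N where N: "\<forall>n>N. strict_pref R (fl n f) g"
    using pc_upper[of "\<lambda>n. fl n f" "C+1" f g] fl_Linf[OF f C(1)] fl_lim f g s by blast
  let ?h = "fl (Suc N) f"
  have hL: "?h \<in> Linf F" "finite (range ?h)" using fl_Linf[OF f C(1)] by auto
  have sh: "strict_pref R ?h g" using N by simp
  obtain N2 where N2: "\<forall>n>N2. strict_pref R ?h (gs n)"
    using pc_lower[of gs "C+1" g ?h] gsL gslim g hL sh by blast
  have "R (gs (Suc N2)) ?h"
    by (rule mono_finite[OF hL(1) gsL(1) hL(2) gsL(3)]) (meson fl_le gsge le order_trans)
  then show False using N2 unfolding strict_pref_def by auto
qed

lemma all_indiff: "UNIV \<in> nullE \<Longrightarrow> f \<in> Linf F \<Longrightarrow> g \<in> Linf F \<Longrightarrow> R f g"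
  unfolding null_iff using paste_UNIV by metis

lemma const_strict: "UNIV \<notin> nullE \<Longrightarrow> x > y \<Longrightarrow> strict_pref R (const_fun x) (const_fun y)"
  using sm_strict[where A=UNIV and f="const_fun 0" and x=x and y=y] by simp

lemma const_mono: "x \<ge> y \<Longrightarrow> R (const_fun x) (const_fun y)"
  by (rule mono[OF const_Linf const_Linf]) (simp add: const_fun_def)

lemma const_lim: "(\<lambda>n. const_fun (c + inverse (real (Suc n))) \<omega>) \<longlonglongrightarrow> const_fun c \<omega>"
  unfolding const_fun_def by (rule LIMSEQ_inverse_real_of_nat_add)
lemma const_lim2: "(\<lambda>n. const_fun (c + - inverse (real (Suc n))) \<omega>) \<longlonglongrightarrow> const_fun c \<omega>"
  unfolding const_fun_def by (rule LIMSEQ_inverse_real_of_nat_add_minus)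

lemma inv_suc_le1: "inverse (real (Suc n)) \<le> 1"
proof -
  have "real (Suc n) \<ge> 1" by simp
  then show ?thesis using inverse_le_1_iff by blast
qed
lemma const_bnd1: "\<bar>const_fun (c + inverse (real (Suc n))) \<omega>\<bar> \<le> \<bar>c\<bar> + 1"
proof -
  have "\<bar>c + inverse (real (Suc n))\<bar> \<le> \<bar>c\<bar> + \<bar>inverse (real (Suc n))\<bar>" by (rule abs_triangle_ineq)
  then show ?thesis using inv_suc_le1[of n] unfolding const_fun_def by simp
qed
lemma const_bnd2: "\<bar>const_fun (c + - inverse (real (Suc n))) \<omega>\<bar> \<le> \<bar>c\<bar> + 1"
proof -
  have "\<bar>c + - inverse (real (Suc n))\<bar> \<le> \<bar>c\<bar> + \<bar>- inverse (real (Suc n))\<bar>" by (rule abs_triangle_ineq)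
  then show ?thesis using inv_suc_le1[of n] unfolding const_fun_def by (simp only: abs_minus_cancel) simp
qed
lemma inv_suc_pos: "inverse (real (Suc n)) > 0" by simp

lemma ce_exists:
  assumes U: "UNIV \<notin> nullE" and f: "f \<in> Linf F"
  shows "\<exists>c. R f (const_fun c) \<and> R (const_fun c) f"
proof -
  obtain C where C: "\<And>\<omega>. \<bar>f \<omega>\<bar> \<le> C" using Linf_bnd[OF f] by blast
  have fC: "R (const_fun C) f" by (rule mono[OF f const_Linf]) (use abs_le_D1[OF C] in \<open>simp add: const_fun_def\<close>)
  have Cf: "R f (const_fun (-C))" by (rule mono[OF const_Linf f]) (use abs_le_D2[OF C] in \<open>simp add: const_fun_def minus_le_iff\<close>)
  define S where "S = {x. R f (const_fun x)}"
  have ne: "-C \<in> S" using Cf by (simp add: S_def)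
  have ub: "x \<le> C" if "x \<in> S" for x
  proof (rule ccontr)
    assume "\<not> x \<le> C"
    then have "strict_pref R (const_fun x) (const_fun C)" using const_strict[OF U] by simp
    moreover have "R (const_fun C) (const_fun x)" using trans[OF fC] that f by (simp add: S_def)
    ultimately show False by (simp add: strict_pref_def)
  qed
  have bdd: "bdd_above S" using ub by (auto simp: bdd_above_def)
  define c where "c = Sup S"
  have 1: "R f (const_fun c)"
  proof (rule ccontr)
    assume "\<not> R f (const_fun c)"
    then have s: "strict_pref R (const_fun c) f" using total_strict f by simp
    obtain N where N: "\<forall>n>N. strict_pref R (const_fun (c + - inverse (real (Suc n)))) f"
      using pc_upper[OF const_Linf const_bnd2 const_lim2 const_Linf f s] by blast
    let ?d = "c + - inverse (real (Suc (Suc N)))"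
    have "?d < Sup S" using inv_suc_pos[of "Suc N"] by (simp add: c_def)
    then obtain x where x: "x \<in> S" "?d < x" using less_cSupE[OF _ ] ne by blast
    have "R f (const_fun ?d)" using trans[of f "const_fun x" "const_fun ?d"] x const_mono[of ?d x] f
      by (simp add: S_def)
    then show False using N[rule_format, of "Suc N"] by (simp add: strict_pref_def)
  qed
  have 2: "R (const_fun c) f"
  proof (rule ccontr)
    assume "\<not> R (const_fun c) f"
    then have s: "strict_pref R f (const_fun c)" using total_strict f by simp
    obtain N where N: "\<forall>n>N. strict_pref R f (const_fun (c + inverse (real (Suc n))))"
      using pc_lower[OF const_Linf const_bnd1 const_lim const_Linf f s] by blast
    let ?d = "c + inverse (real (Suc (Suc N)))"
    have "?d \<in> S" using N[rule_format, of "Suc N"] by (simp add: strict_pref_def S_def)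
    then have "?d \<le> c" unfolding c_def using bdd by (rule cSup_upper)
    then show False using inv_suc_pos[of "Suc N"] by simp
  qed
  show ?thesis using 1 2 by blast
qed

lemma rep_exists: "\<exists>T. represents F T R"
proof (cases "UNIV \<in> nullE")
  case True
  then show ?thesis using all_indiff by (auto simp: represents_def)
next
  case False
  define T where "T f = (SOME c. R f (const_fun c) \<and> R (const_fun c) f)" for f
  have T: "R f (const_fun (T f)) \<and> R (const_fun (T f)) f" if "f \<in> Linf F" for f
    unfolding T_def by (rule someI_ex) (rule ce_exists[OF False that])
  have "represents F T R"
    unfolding represents_def
  proof (intro ballI iffI)
    fix f g assume fg: "f \<in> Linf F" "g \<in> Linf F"
    {
      assume "T g \<le> T f"
      then have "R (const_fun (T f)) (const_fun (T g))" by (rule const_mono)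
      then show "R f g" using T[OF fg(1)] T[OF fg(2)] trans fg const_Linf by meson
    }
    {
      assume r: "R f g"
      show "T g \<le> T f"
      proof (rule ccontr)
        assume "\<not> T g \<le> T f"
        then have "strict_pref R (const_fun (T g)) (const_fun (T f))" using const_strict[OF False] by simp
        moreover have "R (const_fun (T f)) (const_fun (T g))"
          using T[OF fg(1)] T[OF fg(2)] r trans fg const_Linf by meson
        ultimately show False by (simp add: strict_pref_def)
      qed
    }
  qed
  then show ?thesis by blast
qed

lemma ccc:
  assumes U: "UNIV \<notin> nullE" and pw: "pairwise disjnt S" and SF: "S \<subseteq> F" and nn: "\<forall>E\<in>S. E \<notin> nullE"
  shows "countable S"
proof -
  define ind :: "'a set \<Rightarrow> 'a \<Rightarrow> real" where "ind E = paste E (const_fun 1) (const_fun 0)" for E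
  have indL: "E \<in> F \<Longrightarrow> ind E \<in> Linf F" for E by (simp add: ind_def)
  define Sn where "Sn n = {E\<in>S. strict_pref R (ind E) (const_fun (0 + inverse (real (Suc n))))}" for n
  have cover: "S \<subseteq> (\<Union>n. Sn n)"
  proof
    fix E assume E: "E \<in> S"
    then have EF: "E \<in> F" using SF by blast
    have "strict_pref R (paste E (const_fun 1) (const_fun 0)) (paste E (const_fun 0) (const_fun 0))"
      by (rule sm_strict) (use E EF nn in auto)
    then have s: "strict_pref R (ind E) (const_fun 0)" by (simp add: ind_def)
    obtain N where N: "\<forall>n>N. strict_pref R (ind E) (const_fun (0 + inverse (real (Suc n))))"
      using pc_lower[OF const_Linf const_bnd1 const_lim const_Linf indL[OF EF] s] by blast
    have "E \<in> Sn (Suc N)" using E N[rule_format, of "Suc N"] unfolding Sn_def by blast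
    then show "E \<in> (\<Union>n. Sn n)" by blast
  qed
  have fin: "finite (Sn n)" for n
  proof (rule ccontr)
    assume "infinite (Sn n)"
    then obtain e :: "nat \<Rightarrow> 'a set" where e: "inj e" "range e \<subseteq> Sn n"
      using infinite_countable_subset by blast
    have eS: "e k \<in> S" "strict_pref R (ind (e k)) (const_fun (0 + inverse (real (Suc n))))" for k
      using e(2) by (auto simp: Sn_def)
    have eF: "e k \<in> F" for k using eS SF by blast
    have lim: "(\<lambda>k. ind (e k) \<omega>) \<longlonglongrightarrow> const_fun 0 \<omega>" for \<omega>
    proof (cases "\<exists>k0. \<omega> \<in> e k0")
      case True
      then obtain k0 where k0: "\<omega> \<in> e k0" by blast
      have "ind (e k) \<omega> = 0" if "k > k0" for k
      proof -
        have "e k \<noteq> e k0" using e(1) that by (metis inj_eq less_irrefl)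
        then have "disjnt (e k) (e k0)" using pw eS by (meson pairwise_def)
        then have "\<omega> \<notin> e k" using k0 by (auto simp: disjnt_def)
        then show ?thesis by (simp add: ind_def paste_def const_fun_def)
      qed
      then have "eventually (\<lambda>k. ind (e k) \<omega> = const_fun 0 \<omega>) sequentially"
        unfolding eventually_sequentially const_fun_def by (metis Suc_le_eq)
      then show ?thesis by (rule tendsto_eventually)
    next
      case False
      then have "ind (e k) \<omega> = const_fun 0 \<omega>" for k by (simp add: ind_def paste_def)
      then show ?thesis by simp
    qed
    have bnd: "\<bar>ind (e k) \<omega>\<bar> \<le> 1" for k \<omega> by (simp add: ind_def paste_def const_fun_def)
    have "strict_pref R (const_fun (0 + inverse (real (Suc n)))) (const_fun 0)"
      using const_strict[OF U] by simp
    then obtain N where N: "\<forall>k>N. strict_pref R (const_fun (0 + inverse (real (Suc n)))) (ind (e k))"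
      using pc_lower[OF indL[OF eF] bnd lim const_Linf const_Linf] by blast
    show False using N[rule_format, of "Suc N"] eS(2)[of "Suc N"] by (simp add: strict_pref_def)
  qed
  have "countable (\<Union>n. Sn n)" using fin by (simp add: countable_finite)
  then show ?thesis using cover countable_subset by blast
qed


lemma zorn_disj:
  fixes CC :: "'b set set"
  shows "\<exists>S \<subseteq> CC. pairwise disjnt S \<and> (\<forall>B\<in>CC. (\<forall>C\<in>S. disjnt B C) \<longrightarrow> B \<in> S)"
proof -
  define A where "A = {S. S \<subseteq> CC \<and> pairwise disjnt S}"
  have "\<forall>C\<in>chains A. \<Union>C \<in> A"
  proof
    fix C assume C: "C \<in> chains A"
    then have CA: "C \<subseteq> A" and ch: "chain\<^sub>\<subseteq> C" unfolding chains_def by blast+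
    have "pairwise disjnt S" if "S \<in> C" for S using CA that unfolding A_def by blast
    then have "pairwise disjnt (\<Union>C)" using pairwise_chain_Union[OF _ ch] by blast
    moreover have "\<Union>C \<subseteq> CC" using CA unfolding A_def by blast
    ultimately show "\<Union>C \<in> A" unfolding A_def by blast
  qed
  then obtain S where S: "S \<in> A" "\<forall>X\<in>A. S \<subseteq> X \<longrightarrow> X = S" using Zorn_Lemma by blast
  have SA: "S \<subseteq> CC" "pairwise disjnt S" using S(1) unfolding A_def by blast+
  have "B \<in> S" if B: "B \<in> CC" "\<forall>C\<in>S. disjnt B C" for B
  proof -
    have "\<forall>y\<in>S. y \<noteq> B \<longrightarrow> disjnt B y \<and> disjnt y B" using B(2) disjnt_sym by blast
    then have "pairwise disjnt (insert B S)" using SA(2) by (simp add: pairwise_insert)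
    then have "insert B S \<in> A" using SA(1) B(1) unfolding A_def by blast
    then have "insert B S = S" using S(2) by blast
    then show ?thesis by blast
  qed
  then show ?thesis using SA by blast
qed

definition cge :: "'a set \<Rightarrow> ('a \<Rightarrow> real) \<Rightarrow> ('a \<Rightarrow> real) \<Rightarrow> bool" where
  "cge E a b \<longleftrightarrow> (\<forall>h\<in>Linf F. R (paste E a h) (paste E b h))"

lemma null_cge:
  assumes "E \<in> nullE" "a \<in> Linf F" "b \<in> Linf F"
  shows "cge E a b"
  unfolding cge_def
proof
  fix h assume h: "h \<in> Linf F"
  have EF: "E \<in> F" using assms null_iff by blast
  have "R (paste E a h) h" "R h (paste E b h)" using assms(1) assms h unfolding null_iff by blast+
  then show "R (paste E a h) (paste E b h)" using trans assms h EF by (meson paste_Linf)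
qed

lemma cge_empty: "a \<in> Linf F \<Longrightarrow> b \<in> Linf F \<Longrightarrow> cge {} a b"
  using null_cge empty_null by blast

lemma cge_union2:
  assumes "E1 \<in> F" "E2 \<in> F" "E1 \<inter> E2 = {}" "cge E1 a b" "cge E2 a b" "a \<in> Linf F" "b \<in> Linf F"
  shows "cge (E1 \<union> E2) a b"
  unfolding cge_def
proof
  fix h assume h: "h \<in> Linf F"
  have e1: "paste (E1 \<union> E2) a h = paste E1 a (paste E2 a h)" by (auto simp: paste_def fun_eq_iff)
  have e2: "paste E1 b (paste E2 a h) = paste E2 a (paste E1 b h)" using assms(3) by (auto simp: paste_def fun_eq_iff)
  have e3: "paste E2 b (paste E1 b h) = paste (E1 \<union> E2) b h" by (auto simp: paste_def fun_eq_iff)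
  have r1: "R (paste E1 a (paste E2 a h)) (paste E1 b (paste E2 a h))"
    using assms(4) h assms unfolding cge_def by simp
  have r2: "R (paste E2 a (paste E1 b h)) (paste E2 b (paste E1 b h))"
    using assms(5) h assms unfolding cge_def by simp
  show "R (paste (E1 \<union> E2) a h) (paste (E1 \<union> E2) b h)"
    unfolding e1 e3[symmetric] using trans[OF r1 r2[folded e2]] assms h by simp
qed

lemma cge_mono_fun:
  assumes "E \<in> F" "a \<in> Linf F" "b \<in> Linf F" "\<And>\<omega>. \<omega> \<in> E \<Longrightarrow> b \<omega> \<le> a \<omega>"
  shows "cge E a b"
  unfolding cge_def
proof
  fix h assume "h \<in> Linf F"
  show "R (paste E a h) (paste E b h)"
    by (rule mono[OF paste_Linf[OF assms(1,3) \<open>h \<in> Linf F\<close>] paste_Linf[OF assms(1,2) \<open>h \<in> Linf F\<close>]])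
      (use assms(4) in \<open>simp add: paste_def\<close>)
qed

lemma cge_trans:
  assumes "cge E a b" "cge E b c" "E \<in> F" "a \<in> Linf F" "b \<in> Linf F" "c \<in> Linf F"
  shows "cge E a c"
  using assms unfolding cge_def by (meson paste_Linf trans)

lemma cge_finite_union:
  assumes "finite K" "K \<subseteq> F" "pairwise disjnt K" "\<forall>E\<in>K. cge E a b" "a \<in> Linf F" "b \<in> Linf F"
  shows "cge (\<Union>K) a b \<and> \<Union>K \<in> F"
  using assms
proof (induction K rule: finite_induct)
  case empty then show ?case using cge_empty by simp
next
  case (insert E K)
  have IH: "cge (\<Union>K) a b" "\<Union>K \<in> F"
    using insert.IH insert.prems by (auto simp: pairwise_insert)
  have EF: "E \<in> F" using insert.prems by simp
  have disj: "E \<inter> \<Union>K = {}"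
  proof -
    have "disjnt E X" if "X \<in> K" for X
      using insert.prems(2) insert.hyps(2) that unfolding pairwise_def by (metis insertCI)
    then show ?thesis by (auto simp: disjnt_def)
  qed
  have "cge (E \<union> \<Union>K) a b"
    by (rule cge_union2[OF EF IH(2) disj _ IH(1)]) (use insert.prems in auto)
  then show ?case using EF IH(2) by simp
qed

end

locale pref_st = pref +
  assumes st: "ST F R"
begin

lemma st_one:
  assumes "E \<in> F" "a \<in> Linf F" "b \<in> Linf F" "h \<in> Linf F" "R (paste E a h) (paste E b h)"
  shows "cge E a b"
  unfolding cge_def
proof
  fix h' assume h': "h' \<in> Linf F"
  have "\<forall>f \<in> Linf F. \<forall>g \<in> Linf F. \<forall>h \<in> Linf F. \<forall>A \<in> F.
     R (paste A f h) (paste A g h) \<longrightarrow> (\<forall>h' \<in> Linf F. R (paste A f h') (paste A g h'))"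
    using st unfolding ST_def .
  then show "R (paste E a h') (paste E b h')" using assms h' by blast
qed

lemma cge_total:
  assumes "E \<in> F" "a \<in> Linf F" "b \<in> Linf F"
  shows "cge E a b \<or> cge E b a"
proof -
  have "R (paste E a (const_fun 0)) (paste E b (const_fun 0)) \<or> R (paste E b (const_fun 0)) (paste E a (const_fun 0))"
    using total assms by simp
  then show ?thesis using st_one[OF assms(1,2,3) const_Linf] st_one[OF assms(1,3,2) const_Linf] by blast
qed

lemma cge_lim:
  assumes EF: "\<And>n. E n \<in> F" and inc: "incseq E" and c: "\<And>n. cge (E n) a b"
    and a: "a \<in> Linf F" and b: "b \<in> Linf F"
  shows "cge (\<Union>n. E n) a b"
proof -
  let ?E = "\<Union>n. E n"
  have UF: "?E \<in> F" by (rule S.countable_nat_UN) (use EF in blast)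
  obtain C1 where C1: "\<forall>\<omega>. \<bar>a \<omega>\<bar> \<le> C1" using Linf_bnd[OF a] by blast
  obtain C2 where C2: "\<forall>\<omega>. \<bar>b \<omega>\<bar> \<le> C2" using Linf_bnd[OF b] by blast
  note C = C1 C2
  define fs where "fs n = paste (E n) a b" for n
  have fsL: "fs n \<in> Linf F" for n using EF a b by (simp add: fs_def)
  have bnd: "\<bar>fs n \<omega>\<bar> \<le> max C1 C2" for n \<omega>
    using C[rule_format, of \<omega>] by (simp add: fs_def paste_def le_max_iff_disj)
  have lim: "(\<lambda>n. fs n \<omega>) \<longlonglongrightarrow> paste ?E a b \<omega>" for \<omega>
  proof (cases "\<omega> \<in> ?E")
    case True
    then obtain k where k: "\<omega> \<in> E k" by blast
    have "fs n \<omega> = paste ?E a b \<omega>" if "n \<ge> k" for n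
    proof -
      have "E k \<subseteq> E n" using inc that by (rule monoD)
      then have "\<omega> \<in> E n" using k by blast
      then show ?thesis using True unfolding fs_def paste_def by simp
    qed
    then have "eventually (\<lambda>n. fs n \<omega> = paste ?E a b \<omega>) sequentially"
      unfolding eventually_sequentially by blast
    then show ?thesis by (rule tendsto_eventually)
  next
    case False
    then have "fs n \<omega> = paste ?E a b \<omega>" for n by (auto simp: fs_def paste_def)
    then show ?thesis by simp
  qed
  have ge: "R (fs n) b" for n
  proof -
    have "R (paste (E n) a b) (paste (E n) b b)" using c[of n] b unfolding cge_def by blast
    then show ?thesis unfolding fs_def by simp
  qed
  have "R (paste ?E a b) b"
  proof (rule ccontr)
    assume "\<not> R (paste ?E a b) b"
    then have s: "strict_pref R b (paste ?E a b)" using total_strict UF a b by simp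
    have pL: "paste ?E a b \<in> Linf F" using UF a b by simp
    obtain N where N: "\<forall>n>N. strict_pref R b (fs n)"
      using pc_lower[OF fsL bnd lim pL b s] by blast
    then show False using ge[of "Suc N"] N[rule_format, of "Suc N"] unfolding strict_pref_def by blast
  qed
  then show ?thesis using st_one[OF UF a b b] by simp
qed

lemma cge_countable:
  assumes cK: "countable K" and KF: "K \<subseteq> F" and pw: "pairwise disjnt K" and c: "\<forall>E\<in>K. cge E a b"
    and a: "a \<in> Linf F" and b: "b \<in> Linf F"
  shows "cge (\<Union>K) a b"
proof (cases "K = {}")
  case True then show ?thesis using cge_empty a b by simp
next
  case False
  define E where "E n = \<Union>(from_nat_into K ` {..n})" for n
  have sub: "from_nat_into K ` {..n} \<subseteq> K" for n using from_nat_into[OF False] by blast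
  have fin: "cge (E n) a b \<and> E n \<in> F" for n
    unfolding E_def
    by (rule cge_finite_union) (use sub KF pw c a b pairwise_subset in \<open>blast+\<close>)
  have inc: "incseq E"
  proof (rule incseq_SucI)
    fix n show "E n \<subseteq> E (Suc n)" unfolding E_def by (rule Union_mono, rule image_mono) auto
  qed
  have "(\<Union>n. E n) = \<Union>K"
  proof -
    have "(\<Union>n. E n) = \<Union>(range (from_nat_into K))" unfolding E_def by auto
    then show ?thesis using range_from_nat_into[OF False cK] by simp
  qed
  then show ?thesis using cge_lim[of E a b] fin inc a b by simp
qed

lemma not_cge:
  assumes "E \<in> F" "a \<in> Linf F" "b \<in> Linf F" "\<not> cge E a b" "h \<in> Linf F"
  shows "\<not> R (paste E a h) (paste E b h)"
  using st_one assms by blast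

end

context pref_st begin

definition allc :: "'a set set \<Rightarrow> 'a set \<Rightarrow> ('a \<Rightarrow> real) \<Rightarrow> ('a \<Rightarrow> real) \<Rightarrow> bool" where
  "allc G X a b \<longleftrightarrow> (\<forall>B\<in>G. B \<subseteq> X \<longrightarrow> cge B a b)"

lemma allcD: "allc G X a b \<Longrightarrow> B \<in> G \<Longrightarrow> B \<subseteq> X \<Longrightarrow> cge B a b"
  unfolding allc_def by blast

lemma allc_Un2:
  assumes G: "sigma_algebra UNIV G" "G \<subseteq> F" and XY: "X \<in> G" "Y \<in> G"
    and c: "allc G X a b" "allc G Y a b" and ab: "a \<in> Linf F" "b \<in> Linf F"
  shows "allc G (X \<union> Y) a b"
  unfolding allc_def
proof (intro ballI impI)
  interpret GS: sigma_algebra UNIV G by (rule G(1))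
  fix B assume B: "B \<in> G" "B \<subseteq> X \<union> Y"
  have B1: "B \<inter> X \<in> G" using B(1) XY(1) by (rule GS.Int)
  have B2: "B \<inter> Y - X \<in> G" using GS.Int[OF B(1) XY(2)] XY(1) by (rule GS.Diff)
  have c1: "cge (B \<inter> X) a b" by (rule allcD[OF c(1) B1]) blast
  have c2: "cge (B \<inter> Y - X) a b" by (rule allcD[OF c(2) B2]) blast
  have "cge ((B \<inter> X) \<union> (B \<inter> Y - X)) a b"
  proof (rule cge_union2[OF _ _ _ c1 c2 ab])
    show "B \<inter> X \<in> F" using B1 G(2) by blast
    show "B \<inter> Y - X \<in> F" using B2 G(2) by blast
    show "B \<inter> X \<inter> (B \<inter> Y - X) = {}" by blast
  qed
  moreover have "(B \<inter> X) \<union> (B \<inter> Y - X) = B" using B(2) by blast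
  ultimately show "cge B a b" by simp
qed

lemma allc_UN:
  fixes Xs :: "nat \<Rightarrow> 'a set"
  assumes G: "sigma_algebra UNIV G" "G \<subseteq> F" and XG: "\<And>k. Xs k \<in> G"
    and c: "\<And>k. allc G (Xs k) a b" and ab: "a \<in> Linf F" "b \<in> Linf F"
  shows "allc G (\<Union>k. Xs k) a b"
proof -
  interpret GS: sigma_algebra UNIV G by (rule G(1))
  have fin: "allc G (\<Union>k\<le>n. Xs k) a b \<and> (\<Union>k\<le>n. Xs k) \<in> G" for n
  proof (induction n)
    case 0
    have "(\<Union>k\<le>0. Xs k) = Xs 0" by simp
    then show ?case using c[of 0] XG[of 0] by simp
  next
    case (Suc n)
    have eq: "(\<Union>k\<le>Suc n. Xs k) = Xs (Suc n) \<union> (\<Union>k\<le>n. Xs k)" by (auto simp: atMost_Suc)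
    have "allc G (Xs (Suc n) \<union> (\<Union>k\<le>n. Xs k)) a b"
      by (rule allc_Un2[OF G XG _ c _ ab]) (use Suc in blast)+
    moreover have "Xs (Suc n) \<union> (\<Union>k\<le>n. Xs k) \<in> G" using Suc XG[of "Suc n"] GS.Un by blast
    ultimately show ?case unfolding eq by blast
  qed
  show ?thesis
    unfolding allc_def
  proof (intro ballI impI)
    fix B assume B: "B \<in> G" "B \<subseteq> (\<Union>k. Xs k)"
    define E where "E n = B \<inter> (\<Union>k\<le>n. Xs k)" for n
    have EG: "E n \<in> G" for n using B(1) fin[of n] unfolding E_def by (intro GS.Int) blast+
    have EF: "E n \<in> F" for n using EG G(2) by blast
    have cE: "cge (E n) a b" for n using fin[of n] EG[of n] allcD unfolding E_def by blast
    have inc: "incseq E"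
    proof (rule incseq_SucI)
      fix n show "E n \<subseteq> E (Suc n)" unfolding E_def by (auto simp: atMost_Suc)
    qed
    have "(\<Union>n. E n) = B" using B(2) unfolding E_def by blast
    then show "cge B a b" using cge_lim[OF EF inc cE ab] by simp
  qed
qed

end
context pref_st begin
lemma hahn:
  assumes U: "UNIV \<notin> nullE" and G: "sigma_algebra UNIV G" "G \<subseteq> F" and a: "a \<in> Linf F" and b: "b \<in> Linf F"
  shows "\<exists>P\<in>G. allc G P a b \<and> allc G (- P) b a"
proof -
  interpret GS: sigma_algebra UNIV G by (rule G(1))
  define CC where "CC = {C\<in>G. C \<notin> nullE \<and> allc G C b a}"
  obtain SS where SS: "SS \<subseteq> CC" "pairwise disjnt SS" "\<forall>B\<in>CC. (\<forall>C\<in>SS. disjnt B C) \<longrightarrow> B \<in> SS"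
    using zorn_disj[of CC] by blast
  have SSG: "SS \<subseteq> G" using SS(1) unfolding CC_def by blast
  have SSF: "SS \<subseteq> F" using SSG G(2) by blast
  have cSS: "countable SS"
    by (rule ccc[OF U SS(2) SSF]) (use SS(1) in \<open>auto simp: CC_def\<close>)
  define N where "N = \<Union>SS"
  have NG: "N \<in> G" unfolding N_def using cSS SSG by (rule GS.countable_Union)
  have negN: "allc G N b a"
    unfolding allc_def
  proof (intro ballI impI)
    fix B assume B: "B \<in> G" "B \<subseteq> N"
    define K where "K = (\<lambda>C. B \<inter> C) ` SS"
    have cK: "countable K" unfolding K_def using cSS by simp
    have KF: "K \<subseteq> F" unfolding K_def using B SSG G(2) by blast
    have pK: "pairwise disjnt K"
      unfolding K_def pairwise_def
    proof (intro ballI impI)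
      fix X Y assume X: "X \<in> (\<lambda>C. B \<inter> C) ` SS" and Y: "Y \<in> (\<lambda>C. B \<inter> C) ` SS" and ne: "X \<noteq> Y"
      then obtain C1 C2 where C: "C1 \<in> SS" "C2 \<in> SS" "X = B \<inter> C1" "Y = B \<inter> C2" by blast
      then have "C1 \<noteq> C2" using ne by blast
      then have "disjnt C1 C2" using SS(2) C unfolding pairwise_def by blast
      then show "disjnt X Y" using C unfolding disjnt_def by blast
    qed
    have cc: "\<forall>E\<in>K. cge E b a"
    proof
      fix E assume "E \<in> K"
      then obtain C where C: "C \<in> SS" "E = B \<inter> C" unfolding K_def by blast
      have "allc G C b a" using C SS(1) unfolding CC_def by blast
      moreover have "B \<inter> C \<in> G" using B C SSG by blast
      ultimately show "cge E b a" using C allcD by blast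
    qed
    have "cge (\<Union>K) b a" by (rule cge_countable[OF cK KF pK cc b a])
    moreover have "\<Union>K = B" using B(2) unfolding K_def N_def by blast
    ultimately show "cge B b a" by simp
  qed
  have posP: "allc G (- N) a b"
    unfolding allc_def
  proof (intro ballI impI)
    fix D assume D: "D \<in> G" "D \<subseteq> - N"
    have DF: "D \<in> F" using D G(2) by blast
    show "cge D a b"
    proof (rule ccontr)
      assume nc: "\<not> cge D a b"
      define CC' where "CC' = {E\<in>G. E \<subseteq> D \<and> \<not> cge E b a}"
      obtain SS' where SS': "SS' \<subseteq> CC'" "pairwise disjnt SS'" "\<forall>B\<in>CC'. (\<forall>C\<in>SS'. disjnt B C) \<longrightarrow> B \<in> SS'"
        using zorn_disj[of CC'] by blast
      have SS'G: "SS' \<subseteq> G" using SS'(1) unfolding CC'_def by blast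
      have SS'F: "SS' \<subseteq> F" using SS'G G(2) by blast
      have nn': "\<forall>E\<in>SS'. E \<notin> nullE"
      proof
        fix E assume "E \<in> SS'"
        then have "\<not> cge E b a" using SS'(1) unfolding CC'_def by blast
        then show "E \<notin> nullE" using null_cge a b by blast
      qed
      have cSS': "countable SS'" by (rule ccc[OF U SS'(2) SS'F nn'])
      have posE: "\<forall>E\<in>SS'. cge E a b"
      proof
        fix E assume E: "E \<in> SS'"
        then have "\<not> cge E b a" using SS'(1) unfolding CC'_def by blast
        then show "cge E a b" using cge_total[of E a b] E SS'F a b by blast
      qed
      define Mm where "Mm = \<Union>SS'"
      have MG: "Mm \<in> G" unfolding Mm_def using cSS' SS'G by (rule GS.countable_Union)
      have MF: "Mm \<in> F" using MG G(2) by blast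
      have MD: "Mm \<subseteq> D" using SS'(1) unfolding Mm_def CC'_def by blast
      have cM: "cge Mm a b" unfolding Mm_def by (rule cge_countable[OF cSS' SS'F SS'(2) posE a b])
      define D' where "D' = D - Mm"
      have D'G: "D' \<in> G" unfolding D'_def using D(1) MG by blast
      have D'F: "D' \<in> F" using D'G G(2) by blast
      have negD': "allc G D' b a"
        unfolding allc_def
      proof (intro ballI impI)
        fix B assume B: "B \<in> G" "B \<subseteq> D'"
        show "cge B b a"
        proof (rule ccontr)
          assume nB: "\<not> cge B b a"
          then have "B \<in> CC'" using B unfolding CC'_def D'_def by blast
          moreover have "\<forall>C\<in>SS'. disjnt B C" using B(2) unfolding D'_def Mm_def disjnt_def by blast
          ultimately have "B \<in> SS'" using SS'(3) by blast
          then have "B \<subseteq> Mm" unfolding Mm_def by blast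
          then have "B = {}" using B(2) unfolding D'_def by blast
          then show False using nB cge_empty a b by blast
        qed
      qed
      have nnD': "D' \<notin> nullE"
      proof
        assume null: "D' \<in> nullE"
        define h :: "'a \<Rightarrow> real" where "h = const_fun 0"
        have hL: "h \<in> Linf F" by (simp add: h_def)
        have e1: "paste D a h = paste D' a (paste Mm a h)" using MD unfolding D'_def by (auto simp: paste_def fun_eq_iff)
        have e2: "paste D b h = paste D' b (paste Mm b h)" using MD unfolding D'_def by (auto simp: paste_def fun_eq_iff)
        have L1: "paste Mm a h \<in> Linf F" "paste Mm b h \<in> Linf F" using MF a b hL by simp_all
        have r1: "R (paste D' a (paste Mm a h)) (paste Mm a h)" using null L1 a unfolding null_iff by blast
        have r2: "R (paste Mm a h) (paste Mm b h)" using cM hL unfolding cge_def by blast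
        have r3: "R (paste Mm b h) (paste D' b (paste Mm b h))" using null L1 b unfolding null_iff by blast
        have L2: "paste D' a (paste Mm a h) \<in> Linf F" "paste D' b (paste Mm b h) \<in> Linf F"
          using D'F L1 a b by simp_all
        have "R (paste D a h) (paste D b h)"
          unfolding e1 e2 using trans[OF trans[OF r1 r2] r3] L1 L2 by blast
        then have "cge D a b" using st_one[OF DF a b hL] by blast
        then show False using nc by blast
      qed
      have "D' \<in> CC" unfolding CC_def using D'G nnD' negD' by blast
      moreover have "\<forall>C\<in>SS. disjnt D' C" using D(2) unfolding D'_def N_def disjnt_def by blast
      ultimately have "D' \<in> SS" using SS(3) by blast
      then have "D' \<subseteq> N" unfolding N_def by blast
      then have "D' = {}" using D(2) unfolding D'_def by blast
      then show False using nnD' empty_null by simp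
    qed
  qed
  have "- N \<in> G" using GS.compl_sets[OF NG] by (simp add: Compl_eq_Diff_UNIV)
  moreover have "allc G (- (- N)) b a" using negN by simp
  ultimately show ?thesis using posP by blast
qed

end

context pref_st begin

lemma allc_empty: fixes G :: "'a set set" shows "a \<in> Linf F \<Longrightarrow> b \<in> Linf F \<Longrightarrow> allc G {} a b"
  unfolding allc_def
proof (intro ballI impI)
  fix B :: "'a set" assume "a \<in> Linf F" "b \<in> Linf F" "B \<subseteq> {}"
  then show "cge B a b" using cge_empty by simp
qed

lemma allc_mono_fun:
  assumes "G \<subseteq> F" "a \<in> Linf F" "b \<in> Linf F" "\<And>\<omega>. \<omega> \<in> X \<Longrightarrow> b \<omega> \<le> a \<omega>"
  shows "allc G X a b"
  unfolding allc_def
proof (intro ballI impI)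
  fix B assume B: "B \<in> G" "B \<subseteq> X"
  show "cge B a b" by (rule cge_mono_fun) (use assms B in blast)+
qed

lemma levels_exist:
  fixes K :: nat
  assumes U: "UNIV \<notin> nullE" and G: "sigma_algebra UNIV G" "G \<subseteq> F" and f: "f \<in> Linf F"
    and K: "\<And>\<omega>. \<bar>f \<omega>\<bar> \<le> real K"
  shows "\<exists>DD. (\<forall>q. DD q \<in> G) \<and> (\<forall>q\<in>\<rat>. allc G (DD q) f (const_fun q)) \<and>
     (\<forall>q. allc G (- DD q) (const_fun q) f) \<and> (\<forall>q q'. q \<le> q' \<longrightarrow> DD q' \<subseteq> DD q) \<and>
     (\<forall>q. q \<le> - real K \<longrightarrow> DD q = UNIV) \<and> (\<forall>q\<in>\<rat>. q > real K \<longrightarrow> DD q = {})"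
proof -
  interpret GS: sigma_algebra UNIV G by (rule G(1))
  have fle: "f \<omega> \<le> real K" for \<omega> using abs_le_D1[OF K] .
  have fge: "- real K \<le> f \<omega>" for \<omega> using abs_le_D2[OF K[of \<omega>]] by simp
  define PP where "PP q = (if q \<le> - real K then UNIV else if q > real K then {}
     else (SOME P. P \<in> G \<and> allc G P f (const_fun q) \<and> allc G (- P) (const_fun q) f))" for q
  have PPp: "PP q \<in> G \<and> allc G (PP q) f (const_fun q) \<and> allc G (- PP q) (const_fun q) f" for q
  proof (cases "q \<le> - real K")
    case True
    have "const_fun q \<omega> \<le> f \<omega>" for \<omega> using True fge[of \<omega>] unfolding const_fun_def by linarith
    then have "allc G UNIV f (const_fun q)"
      by (intro allc_mono_fun[OF G(2) f const_Linf])
    moreover have "allc G (- UNIV) (const_fun q) f" using allc_empty[OF const_Linf f] by simp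
    ultimately show ?thesis using True GS.top unfolding PP_def by simp
  next
    case False
    show ?thesis
    proof (cases "q > real K")
      case True
      have "f \<omega> \<le> const_fun q \<omega>" for \<omega> using True fle[of \<omega>] unfolding const_fun_def by linarith
      then have "allc G UNIV (const_fun q) f"
        by (intro allc_mono_fun[OF G(2) const_Linf f])
      moreover have "allc G {} f (const_fun q)" using allc_empty[OF f const_Linf] by simp
      ultimately show ?thesis using True False GS.top unfolding PP_def by simp
    next
      case False2: False
      have "\<exists>P. P \<in> G \<and> allc G P f (const_fun q) \<and> allc G (- P) (const_fun q) f"
        using hahn[OF U G f const_Linf] by blast
      then have "(SOME P. P \<in> G \<and> allc G P f (const_fun q) \<and> allc G (- P) (const_fun q) f) \<in> G \<and>
         allc G (SOME P. P \<in> G \<and> allc G P f (const_fun q) \<and> allc G (- P) (const_fun q) f) f (const_fun q) \<and>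
         allc G (- (SOME P. P \<in> G \<and> allc G P f (const_fun q) \<and> allc G (- P) (const_fun q) f)) (const_fun q) f"
        by (rule someI_ex)
      then show ?thesis using False False2 unfolding PP_def by simp
    qed
  qed
  define Rq where "Rq q = {r \<in> \<rat>. r \<le> q}" for q :: real
  have cRq: "countable (Rq q)" for q unfolding Rq_def using countable_rat by (rule countable_subset[rotated]) blast
  have neRq: "Rq q \<noteq> {}" for q
  proof -
    have "real_of_int \<lfloor>q\<rfloor> \<in> Rq q" unfolding Rq_def by (simp add: of_int_floor_le)
    then show ?thesis by blast
  qed
  define DD where "DD q = (\<Inter>r\<in>Rq q. PP r)" for q
  have DDG: "DD q \<in> G" for q
    unfolding DD_def using GS.top cRq by (rule GS.countable_INT'') (use PPp in blast)
  have DDpos: "allc G (DD q) f (const_fun q)" if "q \<in> \<rat>" for q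
    unfolding allc_def
  proof (intro ballI impI)
    fix B assume B: "B \<in> G" "B \<subseteq> DD q"
    have "q \<in> Rq q" using that unfolding Rq_def by simp
    then have "DD q \<subseteq> PP q" unfolding DD_def by blast
    then show "cge B f (const_fun q)" using allcD[OF conjunct1[OF conjunct2[OF PPp[of q]]] B(1)] B(2) by blast
  qed
  have DDneg: "allc G (- DD q) (const_fun q) f" for q
  proof -
    define e where "e = from_nat_into (Rq q)"
    have re: "range e = Rq q" unfolding e_def using neRq cRq by (rule range_from_nat_into)
    have eq: "- DD q = (\<Union>k. - PP (e k))" unfolding DD_def re[symmetric] by auto
    have "allc G (- PP (e k)) (const_fun q) f" for k
      unfolding allc_def
    proof (intro ballI impI)
      fix B assume B: "B \<in> G" "B \<subseteq> - PP (e k)"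
      have BF: "B \<in> F" using B G(2) by blast
      have ek: "e k \<le> q" using re unfolding Rq_def by blast
      have c1: "cge B (const_fun (e k)) f" using allcD[OF conjunct2[OF conjunct2[OF PPp[of "e k"]]] B(1,2)] .
      have c2: "cge B (const_fun q) (const_fun (e k))"
        by (rule cge_mono_fun[OF BF const_Linf const_Linf]) (use ek in \<open>simp add: const_fun_def\<close>)
      show "cge B (const_fun q) f" by (rule cge_trans[OF c2 c1 BF const_Linf const_Linf f])
    qed
    moreover have "- PP (e k) \<in> G" for k using GS.compl_sets[of "PP (e k)"] PPp by (simp add: Compl_eq_Diff_UNIV)
    ultimately show ?thesis unfolding eq using allc_UN[OF G, of "\<lambda>k. - PP (e k)"] const_Linf f by blast
  qed
  have DDanti: "DD q' \<subseteq> DD q" if "q \<le> q'" for q q'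
  proof -
    have "Rq q \<subseteq> Rq q'" unfolding Rq_def using that by auto
    then show ?thesis unfolding DD_def by blast
  qed
  have DDlow: "DD q = UNIV" if "q \<le> - real K" for q
  proof -
    have "PP r = UNIV" if "r \<in> Rq q" for r using that \<open>q \<le> - real K\<close> unfolding Rq_def PP_def by auto
    then show ?thesis unfolding DD_def by blast
  qed
  have DDhigh: "DD q = {}" if "q \<in> \<rat>" "q > real K" for q
  proof -
    have "q \<in> Rq q" using that unfolding Rq_def by simp
    then have "DD q \<subseteq> PP q" unfolding DD_def by blast
    moreover have "PP q = {}" using that unfolding PP_def by auto
    ultimately show ?thesis by blast
  qed
  show ?thesis
  proof (intro exI[of _ DD] conjI)
    show "\<forall>q. DD q \<in> G" using DDG by blast
    show "\<forall>q\<in>\<rat>. allc G (DD q) f (const_fun q)" using DDpos by blast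
    show "\<forall>q. allc G (- DD q) (const_fun q) f" using DDneg by blast
    show "\<forall>q q'. q \<le> q' \<longrightarrow> DD q' \<subseteq> DD q" using DDanti by blast
    show "\<forall>q. q \<le> - real K \<longrightarrow> DD q = UNIV" using DDlow by blast
    show "\<forall>q\<in>\<rat>. q > real K \<longrightarrow> DD q = {}" using DDhigh by blast
  qed
qed

end

context pref_st begin

lemma Linf_G_F:
  assumes G: "sigma_algebra UNIV G" "G \<subseteq> F" and g: "g \<in> Linf G"
  shows "g \<in> Linf F"
  using g G(2) unfolding Linf_def Fmeasurable_def by blast

lemma cond_from_levels:
  fixes K :: nat and DD :: "real \<Rightarrow> 'a set"
  assumes G: "sigma_algebra UNIV G" "G \<subseteq> F" and f: "f \<in> Linf F"
    and DDG: "\<forall>q. DD q \<in> G" and DDpos: "\<forall>q\<in>\<rat>. allc G (DD q) f (const_fun q)"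
    and DDneg: "\<forall>q. allc G (- DD q) (const_fun q) f"
    and DDanti: "\<forall>q q'. q \<le> q' \<longrightarrow> DD q' \<subseteq> DD q"
    and DDlow: "\<forall>q. q \<le> - real K \<longrightarrow> DD q = UNIV" and DDhigh: "\<forall>q\<in>\<rat>. q > real K \<longrightarrow> DD q = {}"
  shows "\<exists>g\<in>Linf G. \<forall>A\<in>G. R (paste A f (const_fun 0)) (paste A g (const_fun 0)) \<and>
                              R (paste A g (const_fun 0)) (paste A f (const_fun 0))"
proof -
  interpret GS: sigma_algebra UNIV G by (rule G(1))
  define S where "S \<omega> = {r\<in>\<rat>. \<omega> \<in> DD r}" for \<omega>
  define g where "g \<omega> = Sup (S \<omega>)" for \<omega>
  have Kq: "- real K \<in> \<rat>" "real K + 1 \<in> \<rat>" by simp_all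
  have neS: "- real K \<in> S \<omega>" for \<omega> using DDlow Kq unfolding S_def by simp
  have ubS: "r \<le> real K" if "r \<in> S \<omega>" for r \<omega>
  proof (rule ccontr)
    assume "\<not> r \<le> real K"
    then have "DD r = {}" using DDhigh that unfolding S_def by simp
    then show False using that unfolding S_def by simp
  qed
  have bddS: "bdd_above (S \<omega>)" for \<omega> using ubS unfolding bdd_above_def by blast
  have neS': "S \<omega> \<noteq> {}" for \<omega> using neS by blast
  have g1: "r \<le> g \<omega>" if "r \<in> \<rat>" "\<omega> \<in> DD r" for r \<omega>
    unfolding g_def by (rule cSup_upper) (use that bddS in \<open>auto simp: S_def\<close>)
  have g2: "g \<omega> \<le> r" if "r \<in> \<rat>" "\<omega> \<notin> DD r" for r \<omega>
    unfolding g_def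
  proof (rule cSup_least[OF neS'])
    fix s assume s: "s \<in> S \<omega>"
    show "s \<le> r"
    proof (rule ccontr)
      assume "\<not> s \<le> r"
      then have "DD s \<subseteq> DD r" using DDanti by simp
      then show False using s that unfolding S_def by blast
    qed
  qed
  have gb: "\<bar>g \<omega>\<bar> \<le> real K + 1" for \<omega>
  proof -
    have "- real K \<le> g \<omega>" using g1[OF Kq(1)] DDlow by simp
    moreover have "g \<omega> \<le> real K + 1" using g2[OF Kq(2)] DDhigh Kq(2) by simp
    ultimately show ?thesis by linarith
  qed
  have gsets: "{\<omega>. t < g \<omega>} = (\<Union>r\<in>{r\<in>\<rat>. t < r}. DD r)" for t
  proof
    show "{\<omega>. t < g \<omega>} \<subseteq> (\<Union>r\<in>{r\<in>\<rat>. t < r}. DD r)"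
    proof
      fix \<omega> assume "\<omega> \<in> {\<omega>. t < g \<omega>}"
      then have "t < Sup (S \<omega>)" unfolding g_def by simp
      then obtain s where "s \<in> S \<omega>" "t < s" using less_cSup_iff[OF neS' bddS] by blast
      then show "\<omega> \<in> (\<Union>r\<in>{r\<in>\<rat>. t < r}. DD r)" unfolding S_def by blast
    qed
    show "(\<Union>r\<in>{r\<in>\<rat>. t < r}. DD r) \<subseteq> {\<omega>. t < g \<omega>}"
      using g1 by fastforce
  qed
  have "{\<omega>. t < g \<omega>} \<in> G" for t
  proof -
    have "countable {r\<in>\<rat>. t < r}" using countable_rat by (rule countable_subset[rotated]) blast
    then have "(\<Union>r\<in>{r\<in>\<rat>. t < r}. DD r) \<in> G" by (rule GS.countable_UN'') (use DDG in blast)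
    then show ?thesis using gsets by simp
  qed
  then have "g \<in> borel_measurable (sigma UNIV G)"
    unfolding borel_measurable_iff_greater using G(1) by (simp add: space_measure_of_conv)
  then have gLG: "g \<in> Linf G" unfolding Linf_def using Fmeas_iff[OF G(1)] gb by blast
  have gL: "g \<in> Linf F" by (rule Linf_G_F[OF G gLG])
  have gmeas[measurable]: "g \<in> borel_measurable M" using Linf_meas[OF gL] .
  define d where "d m = inverse (real (Suc m))" for m
  define gp where "gp m = (\<lambda>\<omega>. g \<omega> + d m)" for m
  define gm where "gm m = (\<lambda>\<omega>. g \<omega> + - d m)" for m
  have d01: "0 < d m" "d m \<le> 1" for m unfolding d_def using inv_suc_le1 by simp_all
  have gpL: "gp m \<in> Linf F" for m
  proof -
    have "gp m \<in> borel_measurable M" unfolding gp_def by measurable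
    moreover have "\<bar>gp m \<omega>\<bar> \<le> real K + 2" for \<omega> using gb[of \<omega>] d01[of m] unfolding gp_def by linarith
    ultimately show ?thesis using Linf_I by blast
  qed
  have gmL: "gm m \<in> Linf F" for m
  proof -
    have "gm m \<in> borel_measurable M" unfolding gm_def by measurable
    moreover have "\<bar>gm m \<omega>\<bar> \<le> real K + 2" for \<omega> using gb[of \<omega>] d01[of m] unfolding gm_def by linarith
    ultimately show ?thesis using Linf_I by blast
  qed
  have sandwich: "cge A f (gm m) \<and> cge A (gp m) f" if A: "A \<in> G" for A m
  proof -
    define r where "r k = - real K + real k * d m" for k
    have rq: "r k \<in> \<rat>" for k unfolding r_def d_def by simp
    have rS: "r (Suc k) = r k + d m" for k unfolding r_def by (simp add: algebra_simps)
    have rmono: "k \<le> k' \<Longrightarrow> r k \<le> r k'" for k k'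
      unfolding r_def using d01(1)[of m] by (simp add: mult_right_mono)
    define L where "L = (2 * K + 1) * Suc m"
    have rL: "r L = real K + 1"
    proof -
      have "real L * d m = real (2 * K + 1)" unfolding L_def d_def by (simp add: field_simps)
      then show ?thesis unfolding r_def by simp
    qed
    define Lk where "Lk k = DD (r k) - DD (r (Suc k))" for k
    have LkG: "Lk k \<in> G" for k unfolding Lk_def using DDG by blast
    have tele: "(\<Union>k<n. Lk k) = DD (r 0) - DD (r n)" for n
    proof (induction n)
      case 0 then show ?case by simp
    next
      case (Suc n)
      have "DD (r (Suc n)) \<subseteq> DD (r n)" using DDanti rmono[of n "Suc n"] by simp
      moreover have "DD (r n) \<subseteq> DD (r 0)" using DDanti rmono[of 0 n] by simp
      ultimately show ?case using Suc unfolding Lk_def lessThan_Suc by auto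
    qed
    have cover: "(\<Union>k<L. Lk k) = UNIV"
    proof -
      have "DD (r 0) = UNIV" using DDlow unfolding r_def by simp
      moreover have "DD (r L) = {}" using DDhigh rL Kq(2) by simp
      ultimately show ?thesis using tele[of L] by simp
    qed
    have disjL: "Lk k \<inter> Lk k' = {}" if "k < k'" for k k'
    proof -
      have "DD (r k') \<subseteq> DD (r (Suc k))" using DDanti rmono[of "Suc k" k'] that by simp
      then show ?thesis unfolding Lk_def by blast
    qed
    define KK where "KK = (\<lambda>k. A \<inter> Lk k) ` {..<L}"
    have fKK: "finite KK" unfolding KK_def by simp
    have KKG: "KK \<subseteq> G" unfolding KK_def using A LkG by blast
    have KKF: "KK \<subseteq> F" using KKG G(2) by blast
    have pKK: "pairwise disjnt KK"
      unfolding KK_def pairwise_def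
    proof (intro ballI impI)
      fix X Y assume "X \<in> (\<lambda>k. A \<inter> Lk k) ` {..<L}" "Y \<in> (\<lambda>k. A \<inter> Lk k) ` {..<L}" "X \<noteq> Y"
      then obtain k k' where kk: "X = A \<inter> Lk k" "Y = A \<inter> Lk k'" "k \<noteq> k'" by blast
      then have "Lk k \<inter> Lk k' = {}" using disjL[of k k'] disjL[of k' k] by (cases "k < k'") auto
      then show "disjnt X Y" using kk unfolding disjnt_def by blast
    qed
    have UKK: "\<Union>KK = A" unfolding KK_def using cover by blast
    have pos: "\<forall>X\<in>KK. cge X f (gm m)"
    proof
      fix X assume "X \<in> KK"
      then obtain k where X: "X = A \<inter> Lk k" unfolding KK_def by blast
      have XG: "X \<in> G" using X A LkG by blast
      have XF: "X \<in> F" using XG G(2) by blast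
      have c1: "cge X f (const_fun (r k))"
        using allcD[OF DDpos[rule_format, OF rq[of k]] XG] X unfolding Lk_def by blast
      have c2: "cge X (const_fun (r k)) (gm m)"
      proof (rule cge_mono_fun[OF XF const_Linf gmL])
        fix \<omega> assume "\<omega> \<in> X"
        then have "\<omega> \<notin> DD (r (Suc k))" using X unfolding Lk_def by blast
        then have "g \<omega> \<le> r (Suc k)" using g2 rq by blast
        then show "gm m \<omega> \<le> const_fun (r k) \<omega>" unfolding gm_def const_fun_def rS by linarith
      qed
      show "cge X f (gm m)" by (rule cge_trans[OF c1 c2 XF f const_Linf gmL])
    qed
    have neg: "\<forall>X\<in>KK. cge X (gp m) f"
    proof
      fix X assume "X \<in> KK"
      then obtain k where X: "X = A \<inter> Lk k" unfolding KK_def by blast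
      have XG: "X \<in> G" using X A LkG by blast
      have XF: "X \<in> F" using XG G(2) by blast
      have c1: "cge X (const_fun (r (Suc k))) f"
        using allcD[OF DDneg[rule_format, of "r (Suc k)"] XG] X unfolding Lk_def by blast
      have c2: "cge X (gp m) (const_fun (r (Suc k)))"
      proof (rule cge_mono_fun[OF XF gpL const_Linf])
        fix \<omega> assume "\<omega> \<in> X"
        then have "\<omega> \<in> DD (r k)" using X unfolding Lk_def by blast
        then have "r k \<le> g \<omega>" using g1 rq by blast
        then show "const_fun (r (Suc k)) \<omega> \<le> gp m \<omega>" unfolding gp_def const_fun_def rS by linarith
      qed
      show "cge X (gp m) f" by (rule cge_trans[OF c2 c1 XF gpL const_Linf f])
    qed
    have "cge (\<Union>KK) f (gm m)" using cge_finite_union[OF fKK KKF pKK pos f gmL] by blast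
    moreover have "cge (\<Union>KK) (gp m) f" using cge_finite_union[OF fKK KKF pKK neg gpL f] by blast
    ultimately show ?thesis unfolding UKK by blast
  qed
  define z :: "'a \<Rightarrow> real" where "z = const_fun 0"
  have zL: "z \<in> Linf F" unfolding z_def by simp
  have result: "R (paste A f z) (paste A g z) \<and> R (paste A g z) (paste A f z)" if A: "A \<in> G" for A
  proof -
    have AF: "A \<in> F" using A G(2) by blast
    have pfL: "paste A f z \<in> Linf F" and pgL: "paste A g z \<in> Linf F" using AF f gL zL by simp_all
    have lo: "R (paste A f z) (paste A (gm m) z)" for m using sandwich[OF A, of m] zL unfolding cge_def by blast
    have hi: "R (paste A (gp m) z) (paste A f z)" for m using sandwich[OF A, of m] zL unfolding cge_def by blast
    have bnd: "\<bar>paste A (gp m) z \<omega>\<bar> \<le> real K + 2" "\<bar>paste A (gm m) z \<omega>\<bar> \<le> real K + 2" for m \<omega>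
      using gb[of \<omega>] d01[of m] unfolding paste_def gp_def gm_def z_def const_fun_def by auto
    have limp: "(\<lambda>m. paste A (gp m) z \<omega>) \<longlonglongrightarrow> paste A g z \<omega>" for \<omega>
    proof (cases "\<omega> \<in> A")
      case True
      then show ?thesis unfolding paste_def gp_def d_def using LIMSEQ_inverse_real_of_nat_add by simp
    next
      case False
      then show ?thesis unfolding paste_def by simp
    qed
    have limm: "(\<lambda>m. paste A (gm m) z \<omega>) \<longlonglongrightarrow> paste A g z \<omega>" for \<omega>
    proof (cases "\<omega> \<in> A")
      case True
      then show ?thesis unfolding paste_def gm_def d_def using LIMSEQ_inverse_real_of_nat_add_minus by simp
    next
      case False
      then show ?thesis unfolding paste_def by simp
    qed
    have gpzL: "paste A (gp m) z \<in> Linf F" and gmzL: "paste A (gm m) z \<in> Linf F" for m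
      using AF gpL gmL zL by simp_all
    have 1: "R (paste A f z) (paste A g z)"
    proof (rule ccontr)
      assume "\<not> R (paste A f z) (paste A g z)"
      then have s: "strict_pref R (paste A g z) (paste A f z)" using total_strict pfL pgL by blast
      obtain N where N: "\<forall>n>N. strict_pref R (paste A (gm n) z) (paste A f z)"
        using pc_upper[OF gmzL bnd(2) limm pgL pfL s] by blast
      then show False using lo[of "Suc N"] N[rule_format, of "Suc N"] unfolding strict_pref_def by blast
    qed
    have 2: "R (paste A g z) (paste A f z)"
    proof (rule ccontr)
      assume "\<not> R (paste A g z) (paste A f z)"
      then have s: "strict_pref R (paste A f z) (paste A g z)" using total_strict pfL pgL by blast
      obtain N where N: "\<forall>n>N. strict_pref R (paste A f z) (paste A (gp n) z)"
        using pc_lower[OF gpzL bnd(1) limp pgL pfL s] by blast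
      then show False using hi[of "Suc N"] N[rule_format, of "Suc N"] unfolding strict_pref_def by blast
    qed
    show ?thesis using 1 2 by blast
  qed
  show ?thesis using gLG result unfolding z_def by blast
qed

end

context pref begin

lemma T_R: "represents F T R \<Longrightarrow> x \<in> Linf F \<Longrightarrow> y \<in> Linf F \<Longrightarrow> T x = T y \<Longrightarrow> R x y \<and> R y x"
  unfolding represents_def by (metis order_refl)

lemma R_T: "represents F T R \<Longrightarrow> x \<in> Linf F \<Longrightarrow> y \<in> Linf F \<Longrightarrow> R x y \<Longrightarrow> R y x \<Longrightarrow> T x = T y"
  unfolding represents_def by (meson order_antisym)

lemma uniq_const:
  assumes "B \<in> F" "B \<notin> nullE" "k \<in> Linf F" "R (paste B (const_fun x) k) (paste B (const_fun y) k)"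
  shows "y \<le> x"
proof (rule ccontr)
  assume "\<not> y \<le> x"
  then have "strict_pref R (paste B (const_fun y) k) (paste B (const_fun x) k)"
    using sm_strict[OF assms(1,2,3)] by simp
  then show False using assms(4) unfolding strict_pref_def by blast
qed

lemma sig_const:
  assumes psi: "psi \<in> Linf (sigma_of_set A)" and w: "\<omega> \<in> X" "\<omega>' \<in> X" and X: "X = A \<or> X = - A"
  shows "psi \<omega> = psi \<omega>'"
proof -
  have "Fmeasurable (sigma_of_set A) psi" using psi unfolding Linf_def by blast
  then have "psi -` {psi \<omega>} \<in> sigma_of_set A" unfolding Fmeasurable_def by simp
  then have "psi -` {psi \<omega>} = {} \<or> psi -` {psi \<omega>} = UNIV \<or> psi -` {psi \<omega>} = A \<or> psi -` {psi \<omega>} = - A"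
    unfolding sigma_of_set_def by simp
  moreover have "\<omega> \<in> psi -` {psi \<omega>}" by simp
  ultimately have "\<omega>' \<in> psi -` {psi \<omega>}" using w X by auto
  then show ?thesis by simp
qed

lemma key_decomp:
  assumes T: "represents F T R" and c: "conditionable_on F T (sigma_of_set A)" and A: "A \<in> F"
    and ne: "A \<noteq> {}" "A \<noteq> UNIV" and phi: "phi \<in> Linf F"
  shows "\<exists>a b. R (paste A phi (const_fun 0)) (paste A (const_fun a) (const_fun 0))
     \<and> R (paste A (const_fun a) (const_fun 0)) (paste A phi (const_fun 0))
     \<and> R (paste (-A) phi (const_fun 0)) (paste (-A) (const_fun b) (const_fun 0))
     \<and> R (paste (-A) (const_fun b) (const_fun 0)) (paste (-A) phi (const_fun 0))
     \<and> R phi (paste A (const_fun a) (const_fun b)) \<and> R (paste A (const_fun a) (const_fun b)) phi"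
proof -
  obtain psi where psi: "psi \<in> Linf (sigma_of_set A)"
    and eqs: "\<forall>B \<in> sigma_of_set A. T (paste B phi (const_fun 0)) = T (paste B psi (const_fun 0))"
    using c phi unfolding conditionable_on_def by blast
  obtain w0 where w0: "w0 \<in> A" using ne(1) by blast
  obtain w1 where w1: "w1 \<notin> A" using ne(2) by blast
  define a where "a = psi w0"
  define b where "b = psi w1"
  have pa: "psi \<omega> = a" if "\<omega> \<in> A" for \<omega> unfolding a_def using sig_const[OF psi, where X="A" and \<omega>=\<omega> and \<omega>'=w0] that w0 by simp
  have pb: "psi \<omega> = b" if "\<omega> \<notin> A" for \<omega> unfolding b_def using sig_const[OF psi, where X="-A" and \<omega>=\<omega> and \<omega>'=w1] that w1 by simp
  have e1: "paste A psi (const_fun 0) = paste A (const_fun a) (const_fun 0)"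
    using pa by (auto simp: paste_def const_fun_def fun_eq_iff)
  have e2: "paste (-A) psi (const_fun 0) = paste (-A) (const_fun b) (const_fun 0)"
    using pb by (auto simp: paste_def const_fun_def fun_eq_iff)
  have e3: "psi = paste A (const_fun a) (const_fun b)"
    using pa pb by (auto simp: paste_def const_fun_def fun_eq_iff)
  have mem: "A \<in> sigma_of_set A" "- A \<in> sigma_of_set A" "UNIV \<in> sigma_of_set A" unfolding sigma_of_set_def by auto
  have t1: "T (paste A phi (const_fun 0)) = T (paste A (const_fun a) (const_fun 0))" using eqs mem e1 by metis
  have t2: "T (paste (-A) phi (const_fun 0)) = T (paste (-A) (const_fun b) (const_fun 0))" using eqs mem e2 by metis
  have t3: "T phi = T (paste A (const_fun a) (const_fun b))" using eqs mem e3 paste_UNIV by metis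
  have AF: "- A \<in> F" using A by simp
  have "R (paste A phi (const_fun 0)) (paste A (const_fun a) (const_fun 0))
     \<and> R (paste A (const_fun a) (const_fun 0)) (paste A phi (const_fun 0))
     \<and> R (paste (-A) phi (const_fun 0)) (paste (-A) (const_fun b) (const_fun 0))
     \<and> R (paste (-A) (const_fun b) (const_fun 0)) (paste (-A) phi (const_fun 0))
     \<and> R phi (paste A (const_fun a) (const_fun b)) \<and> R (paste A (const_fun a) (const_fun b)) phi"
    using T_R[OF T _ _ t1] T_R[OF T _ _ t2] T_R[OF T _ _ t3] A AF phi by simp
  then show ?thesis by blast
qed

end

context pref begin

lemma cond2_ST:
  assumes T: "represents F T R" and c: "\<forall>A\<in>F. conditionable_on F T (sigma_of_set A)"
  shows "ST F R"
  unfolding ST_def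
proof (intro ballI impI)
  fix f g h E h'
  assume f: "f \<in> Linf F" and g: "g \<in> Linf F" and h: "h \<in> Linf F" and E: "E \<in> F"
    and hyp: "R (paste E f h) (paste E g h)" and h': "h' \<in> Linf F"
  have EC: "- E \<in> F" using E by simp
  have L: "paste E f h \<in> Linf F" "paste E g h \<in> Linf F" "paste E f h' \<in> Linf F" "paste E g h' \<in> Linf F"
    using E f g h h' by simp_all
  show "R (paste E f h') (paste E g h')"
  proof (cases "E \<in> nullE")
    case True
    have "R (paste E f h') h'" "R h' (paste E g h')" using True f g h' unfolding null_iff by blast+
    then show ?thesis using trans L h' by blast
  next
    case nE: False
    show ?thesis
    proof (cases "- E \<in> nullE")
      case True
      have eqs: "paste E u v = paste (-E) v u" for u v :: "'a \<Rightarrow> real" by (auto simp: paste_def fun_eq_iff)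
      have n: "R (paste (-E) v u) u \<and> R u (paste (-E) v u)" if "u \<in> Linf F" "v \<in> Linf F" for u v
        using True that unfolding null_iff by blast
      have r1: "R (paste E f h') f" using n[OF f h'] eqs by simp
      have r2: "R f (paste E f h)" using n[OF f h] eqs by simp
      have r3: "R (paste E g h) g" using n[OF g h] eqs by simp
      have r4: "R g (paste E g h')" using n[OF g h'] eqs by simp
      have "R (paste E f h') (paste E f h)" using trans[OF r1 r2] L f by blast
      then have "R (paste E f h') (paste E g h)" using trans hyp L by blast
      then have "R (paste E f h') g" using trans r3 L g by blast
      then show ?thesis using trans r4 L g by blast
    next
      case nEC: False
      have ne: "E \<noteq> {}" "E \<noteq> UNIV" using nE nEC empty_null by auto
      note kd = key_decomp[OF T c[rule_format, OF E] E ne]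
      define z :: "'a \<Rightarrow> real" where "z = const_fun 0"
      have zL: "z \<in> Linf F" unfolding z_def by simp
      obtain a1 b1 where d1:
        "R (paste E (paste E f h) z) (paste E (const_fun a1) z)" "R (paste E (const_fun a1) z) (paste E (paste E f h) z)"
        "R (paste (-E) (paste E f h) z) (paste (-E) (const_fun b1) z)" "R (paste (-E) (const_fun b1) z) (paste (-E) (paste E f h) z)"
        "R (paste E f h) (paste E (const_fun a1) (const_fun b1))" "R (paste E (const_fun a1) (const_fun b1)) (paste E f h)"
        using kd[OF L(1)] unfolding z_def by blast
      obtain a2 b2 where d2:
        "R (paste E (paste E g h) z) (paste E (const_fun a2) z)" "R (paste E (const_fun a2) z) (paste E (paste E g h) z)"
        "R (paste (-E) (paste E g h) z) (paste (-E) (const_fun b2) z)" "R (paste (-E) (const_fun b2) z) (paste (-E) (paste E g h) z)"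
        "R (paste E g h) (paste E (const_fun a2) (const_fun b2))" "R (paste E (const_fun a2) (const_fun b2)) (paste E g h)"
        using kd[OF L(2)] unfolding z_def by blast
      obtain a3 b3 where d3:
        "R (paste E (paste E f h') z) (paste E (const_fun a3) z)" "R (paste E (const_fun a3) z) (paste E (paste E f h') z)"
        "R (paste (-E) (paste E f h') z) (paste (-E) (const_fun b3) z)" "R (paste (-E) (const_fun b3) z) (paste (-E) (paste E f h') z)"
        "R (paste E f h') (paste E (const_fun a3) (const_fun b3))" "R (paste E (const_fun a3) (const_fun b3)) (paste E f h')"
        using kd[OF L(3)] unfolding z_def by blast
      obtain a4 b4 where d4:
        "R (paste E (paste E g h') z) (paste E (const_fun a4) z)" "R (paste E (const_fun a4) z) (paste E (paste E g h') z)"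
        "R (paste (-E) (paste E g h') z) (paste (-E) (const_fun b4) z)" "R (paste (-E) (const_fun b4) z) (paste (-E) (paste E g h') z)"
        "R (paste E g h') (paste E (const_fun a4) (const_fun b4))" "R (paste E (const_fun a4) (const_fun b4)) (paste E g h')"
        using kd[OF L(4)] unfolding z_def by blast
      have pp1: "paste E (paste E u v) z = paste E u z" for u v by (auto simp: paste_def fun_eq_iff)
      have pp2: "paste (-E) (paste E u v) z = paste (-E) v z" for u v by (auto simp: paste_def fun_eq_iff)
      have cL: "paste E (const_fun x) z \<in> Linf F" "paste (-E) (const_fun x) z \<in> Linf F"
        "paste E (const_fun x) (const_fun y) \<in> Linf F" for x y using E EC zL by simp_all
      have bL: "paste E f z \<in> Linf F" "paste E g z \<in> Linf F" "paste (-E) h z \<in> Linf F" "paste (-E) h' z \<in> Linf F"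
        using E EC f g h h' zL by simp_all
      have "R (paste (-E) (const_fun b1) z) (paste (-E) (const_fun b2) z)"
        using trans[OF d1(4)[unfolded pp2] d2(3)[unfolded pp2]] cL bL by blast
      then have b21: "b2 \<le> b1" using uniq_const[OF EC nEC zL] by blast
      have "R (paste (-E) (const_fun b2) z) (paste (-E) (const_fun b1) z)"
        using trans[OF d2(4)[unfolded pp2] d1(3)[unfolded pp2]] cL bL by blast
      then have b12: "b1 \<le> b2" using uniq_const[OF EC nEC zL] by blast
      have "R (paste (-E) (const_fun b3) z) (paste (-E) (const_fun b4) z)"
        using trans[OF d3(4)[unfolded pp2] d4(3)[unfolded pp2]] cL bL by blast
      then have b43: "b4 \<le> b3" using uniq_const[OF EC nEC zL] by blast
      have "R (paste (-E) (const_fun b4) z) (paste (-E) (const_fun b3) z)"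
        using trans[OF d4(4)[unfolded pp2] d3(3)[unfolded pp2]] cL bL by blast
      then have b34: "b3 \<le> b4" using uniq_const[OF EC nEC zL] by blast
      have "R (paste E (const_fun a1) z) (paste E (const_fun a3) z)"
        using trans[OF d1(2)[unfolded pp1] d3(1)[unfolded pp1]] cL bL by blast
      then have a31: "a3 \<le> a1" using uniq_const[OF E nE zL] by blast
      have "R (paste E (const_fun a3) z) (paste E (const_fun a1) z)"
        using trans[OF d3(2)[unfolded pp1] d1(1)[unfolded pp1]] cL bL by blast
      then have a13: "a1 \<le> a3" using uniq_const[OF E nE zL] by blast
      have "R (paste E (const_fun a2) z) (paste E (const_fun a4) z)"
        using trans[OF d2(2)[unfolded pp1] d4(1)[unfolded pp1]] cL bL by blast
      then have a42: "a4 \<le> a2" using uniq_const[OF E nE zL] by blast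
      have "R (paste E (const_fun a4) z) (paste E (const_fun a2) z)"
        using trans[OF d4(2)[unfolded pp1] d2(1)[unfolded pp1]] cL bL by blast
      then have a24: "a2 \<le> a4" using uniq_const[OF E nE zL] by blast
      have eb: "b2 = b1" "b4 = b3" and ea: "a3 = a1" "a4 = a2" using b21 b12 b43 b34 a31 a13 a42 a24 by simp_all
      have "R (paste E (const_fun a1) (const_fun b1)) (paste E g h)"
        using trans[OF d1(6) hyp] cL L by blast
      then have "R (paste E (const_fun a1) (const_fun b1)) (paste E (const_fun a2) (const_fun b1))"
        using trans[OF _ d2(5)] eb cL L by metis
      then have a12: "a2 \<le> a1" using uniq_const[OF E nE const_Linf] by blast
      have "R (paste E (const_fun a3) (const_fun b3)) (paste E (const_fun a4) (const_fun b3))"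
        using step_mono[OF E _ const_Linf] a12 ea by simp
      then have "R (paste E (const_fun a3) (const_fun b3)) (paste E g h')"
        using trans[OF _ d4(6)] eb cL L by metis
      then show ?thesis using trans[OF d3(5)] cL L by blast
    qed
  qed
qed

end

context pref_st begin

lemma const_Linf_G:
  assumes G: "sigma_algebra UNIV G"
  shows "const_fun c \<in> Linf G"
proof -
  interpret GS: sigma_algebra UNIV G by (rule G)
  have "const_fun c -` B \<in> G" for B
  proof (cases "c \<in> B")
    case True then have e: "const_fun c -` B = UNIV" by (auto simp: const_fun_def)
    show ?thesis unfolding e by (rule GS.top)
  next
    case False then have e: "const_fun c -` B = {}" by (auto simp: const_fun_def)
    show ?thesis unfolding e by (rule GS.empty_sets)
  qed
  then show ?thesis unfolding Linf_def Fmeasurable_def const_fun_def by auto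
qed

lemma ST_cond1:
  assumes T: "represents F T R" and G: "sub_sigma G F"
  shows "conditionable_on F T G"
  unfolding conditionable_on_def
proof
  fix f assume f: "f \<in> Linf F"
  have G1: "sigma_algebra UNIV G" and G2: "G \<subseteq> F" using G unfolding sub_sigma_def by blast+
  show "\<exists>g\<in>Linf G. \<forall>A\<in>G. T (paste A f (const_fun 0)) = T (paste A g (const_fun 0))"
  proof (cases "UNIV \<in> nullE")
    case True
    have "\<forall>A\<in>G. T (paste A f (const_fun 0)) = T (paste A (const_fun 0) (const_fun 0))"
    proof
      fix A assume "A \<in> G"
      then have AF: "A \<in> F" using G2 by blast
      have L: "paste A f (const_fun 0) \<in> Linf F" "paste A (const_fun 0) (const_fun 0) \<in> Linf F"
        using AF f by simp_all
      show "T (paste A f (const_fun 0)) = T (paste A (const_fun 0) (const_fun 0))"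
        using R_T[OF T L all_indiff[OF True L] all_indiff[OF True L(2,1)]] .
    qed
    then show ?thesis using const_Linf_G[OF G1] by blast
  next
    case False
    obtain C where C: "\<forall>\<omega>. \<bar>f \<omega>\<bar> \<le> C" using Linf_bnd[OF f] by blast
    define K where "K = nat \<lceil>C\<rceil>"
    have K: "\<bar>f \<omega>\<bar> \<le> real K" for \<omega> using C real_nat_ceiling_ge[of C] unfolding K_def by (meson order_trans)
    obtain DD where DD: "(\<forall>q. DD q \<in> G)" "(\<forall>q\<in>\<rat>. allc G (DD q) f (const_fun q))"
     "(\<forall>q. allc G (- DD q) (const_fun q) f)" "(\<forall>q q'. q \<le> q' \<longrightarrow> DD q' \<subseteq> DD q)"
     "(\<forall>q. q \<le> - real K \<longrightarrow> DD q = UNIV)" "(\<forall>q\<in>\<rat>. q > real K \<longrightarrow> DD q = {})"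
      using levels_exist[OF False G1 G2 f K] by blast
    obtain g where g: "g \<in> Linf G" and gr: "\<forall>A\<in>G. R (paste A f (const_fun 0)) (paste A g (const_fun 0)) \<and>
                              R (paste A g (const_fun 0)) (paste A f (const_fun 0))"
      using cond_from_levels[OF G1 G2 f DD] by blast
    have gF: "g \<in> Linf F" using Linf_G_F[OF G1 G2 g] .
    have "\<forall>A\<in>G. T (paste A f (const_fun 0)) = T (paste A g (const_fun 0))"
    proof
      fix A assume A: "A \<in> G"
      then have AF: "A \<in> F" using G2 by blast
      have L: "paste A f (const_fun 0) \<in> Linf F" "paste A g (const_fun 0) \<in> Linf F"
        using AF f gF by simp_all
      show "T (paste A f (const_fun 0)) = T (paste A g (const_fun 0))"
        using R_T[OF T L] gr A by blast
    qed
    then show ?thesis using g by blast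
  qed
qed

end

lemma sigma_of_set_sub:
  assumes sa: "sigma_algebra (UNIV::'a set) F" and A: "A \<in> F"
  shows "sub_sigma (sigma_of_set A) F"
proof -
  interpret S: sigma_algebra "UNIV::'a set" F by (rule sa)
  have eq: "sigma_of_set A = {{}, A, UNIV - A, UNIV}" unfolding sigma_of_set_def by auto
  have "sigma_algebra UNIV (sigma_of_set A)" unfolding eq by (rule sigma_algebra_single_set) simp
  moreover have "sigma_of_set A \<subseteq> F" unfolding eq using A S.top S.compl_sets[OF A] by simp
  ultimately show ?thesis unfolding sub_sigma_def by blast
qed

theorem mainTheorem2:
  fixes F :: "'a set set"
    and R :: "('a \<Rightarrow> real) \<Rightarrow> ('a \<Rightarrow> real) \<Rightarrow> bool"
  assumes "sigma_algebra (UNIV :: 'a set) F"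
    and "preference_order F R"
    and "SM F R"
    and "PC F R"
  shows "(ST F R \<longleftrightarrow>
           (\<forall>T. represents F T R \<longrightarrow> (\<forall>G. sub_sigma G F \<longrightarrow> conditionable_on F T G)))
       \<and> (ST F R \<longleftrightarrow>
           (\<forall>T. represents F T R \<longrightarrow> (\<forall>A \<in> F. conditionable_on F T (sigma_of_set A))))"
proof -
  interpret P: pref F R by (rule pref.intro[OF assms])
  have i_ii: "\<forall>T. represents F T R \<longrightarrow> (\<forall>G. sub_sigma G F \<longrightarrow> conditionable_on F T G)" if st: "ST F R"
  proof -
    interpret Q: pref_st F R by (rule pref_st.intro[OF pref.intro[OF assms]]) (rule pref_st_axioms.intro[OF st])
    show ?thesis using Q.ST_cond1 by blast
  qed
  have ii_iii: "\<forall>T. represents F T R \<longrightarrow> (\<forall>A \<in> F. conditionable_on F T (sigma_of_set A))"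
    if c: "\<forall>T. represents F T R \<longrightarrow> (\<forall>G. sub_sigma G F \<longrightarrow> conditionable_on F T G)"
    using c sigma_of_set_sub[OF assms(1)] by blast
  have iii_i: "ST F R" if c: "\<forall>T. represents F T R \<longrightarrow> (\<forall>A \<in> F. conditionable_on F T (sigma_of_set A))"
  proof -
    obtain T where T: "represents F T R" using P.rep_exists by blast
    show ?thesis using P.cond2_ST[OF T] c T by blast
  qed
  show ?thesis using i_ii ii_iii iii_i by blast
qed

end
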